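(* For every $f\in\mathcal F^{\,r}_{op}$, every faithful $\rho\in\mathcal D^1_n$ and every self-adjoint $A\in M_n(\mathbb C)$, $$I^f_\rho(A)\le I^{SLD}_\rho(A)\le \frac{1}{2f(0)}\,I^f_\rho(A).$$ In particular, for the Wigner–Yanase information $I^{WY}_\rho(A)=-\frac12\mathrm{Tr}([\rho^{1/2},A]^2)$ (which equals $I^{f_{WY}}_\rho(A)$ with $f_{WY}(x)=\big(\frac{1+\sqrt x}{2}\big)^2$, $f_{WY}(0)=\frac14$), one has $I^{WY}_\rho(A)\le I^{SLD}_\rho(A)\le 2 I^{WY}_\rho(A)$.
   Context: $\mathcal F_{op}$ is the class of functions $f:(0,\infty)\to(0,\infty)$ that are operator monotone, satisfy $f(1)=1$ and $tf(t^{-1})=f(t)$ for all $t>0$. $f(0):=\lim_{x\to0^+}f(x)$, and $\mathcal F^{\,r}_{op}=\{f\in\mathcal F_{op}: f(0)\neq0\}$. $\mathcal D_n^1$ is the set of strictly positive $n\times n$ density matrices. For $x,y>0$, $m_f(x,y)=xf(y/x)$; $L_\rho(X)=\rho X$, $R_\rho(X)=X\rho$, and $m_f(L_\rho,R_\rho)$ multiplies the entry $X_{ij}$ of $X$ (in an orthonormal eigenbasis of $\rho$ with eigenvalues $\lambda_i$) by $m_f(\lambda_i,\lambda_j)$. $\|X\|^2_{\rho,f}=\mathrm{Tr}\big(X^* m_f(L_\rho,R_\rho)^{-1}(X)\big)$. The $f$-information is $I^f_\rho(A)=\frac{f(0)}{2}\|i[\rho,A]\|^2_{\rho,f}$. The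 SLD-information is $I^{SLD}_\rho(A)=\frac14\mathrm{Tr}(\rho L^2)$ with $L=2(L_\rho+R_\rho)^{-1}(i[\rho,A])$; equivalently $I^{SLD}_\rho=I^{f_{SLD}}_\rho$ with $f_{SLD}(x)=\frac{1+x}{2}$. *)

theory Defs
  imports Complex_Main "Jordan_Normal_Form.Matrix"
begin

definition adj :: "complex mat \<Rightarrow> complex mat" where
  "adj A = transpose_mat (map_mat cnj A)"

definition tr :: "complex mat \<Rightarrow> complex" where
  "tr A = (\<Sum>i<dim_row A. A $$ (i,i))"

definition hermitian_mat :: "nat \<Rightarrow> complex mat \<Rightarrow> bool" where
  "hermitian_mat n A \<longleftrightarrow> A \<in> carrier_mat n n \<and> adj A = A"

definition unitary_mat :: "nat \<Rightarrow> complex mat \<Rightarrow> bool" where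
  "unitary_mat n U \<longleftrightarrow> U \<in> carrier_mat n n \<and> adj U * U = 1\<^sub>m n"

definition qform :: "nat \<Rightarrow> complex mat \<Rightarrow> (nat \<Rightarrow> complex) \<Rightarrow> complex" where
  "qform n A v = (\<Sum>i<n. \<Sum>j<n. cnj (v i) * A $$ (i,j) * v j)"

definition psd_mat :: "nat \<Rightarrow> complex mat \<Rightarrow> bool" where
  "psd_mat n A \<longleftrightarrow> hermitian_mat n A \<and> (\<forall>v. Re (qform n A v) \<ge> 0)"

definition pd_mat :: "nat \<Rightarrow> complex mat \<Rightarrow> bool" where
  "pd_mat n A \<longleftrightarrow> hermitian_mat n A \<and> (\<forall>v. (\<exists>i<n. v i \<noteq> 0) \<longrightarrow> Re (qform n A v) > 0)"

definition spectral_decomp :: "nat \<Rightarrow> complex mat \<Rightarrow> complex mat \<Rightarrow> (nat \<Rightarrow> real) \<Rightarrow> bool" where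
  "spectral_decomp n A U lam \<longleftrightarrow> unitary_mat n U \<and>
     A = U * mat_diag n (\<lambda>i. complex_of_real (lam i)) * adj U"

definition mat_fun_rel :: "(real \<Rightarrow> real) \<Rightarrow> nat \<Rightarrow> complex mat \<Rightarrow> complex mat \<Rightarrow> bool" where
  "mat_fun_rel f n A FA \<longleftrightarrow> (\<exists>U lam. spectral_decomp n A U lam \<and>
     FA = U * mat_diag n (\<lambda>i. complex_of_real (f (lam i))) * adj U)"

definition operator_monotone :: "(real \<Rightarrow> real) \<Rightarrow> bool" where
  "operator_monotone f \<longleftrightarrow> (\<forall>n A B FA FB. pd_mat n A \<and> pd_mat n B \<and> psd_mat n (B - A)
      \<and> mat_fun_rel f n A FA \<and> mat_fun_rel f n B FB \<longrightarrow> psd_mat n (FB - FA))"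

definition F_op :: "(real \<Rightarrow> real) set" where
  "F_op = {f. operator_monotone f \<and> (\<forall>x>0. f x > 0) \<and> f 1 = 1 \<and> (\<forall>t>0. t * f (1/t) = f t)}"

definition f_zero :: "(real \<Rightarrow> real) \<Rightarrow> real" where
  "f_zero f = Lim (at_right 0) f"

definition F_op_r :: "(real \<Rightarrow> real) set" where
  "F_op_r = {f \<in> F_op. f_zero f \<noteq> 0}"

definition density_mat :: "nat \<Rightarrow> complex mat \<Rightarrow> bool" where
  "density_mat n \<rho> \<longleftrightarrow> pd_mat n \<rho> \<and> tr \<rho> = 1"

definition m_f :: "(real \<Rightarrow> real) \<Rightarrow> real \<Rightarrow> real \<Rightarrow> real" where
  "m_f f x y = x * f (y / x)"

definition eig_decomp :: "nat \<Rightarrow> complex mat \<Rightarrow> complex mat \<times> (nat \<Rightarrow> real)" where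
  "eig_decomp n \<rho> = (SOME p. spectral_decomp n \<rho> (fst p) (snd p))"

text \<open>m_f(L_rho,R_rho)^{-1}(X): divide entry (i,j) of X (in the eigenbasis) by m_f(lam_i,lam_j).\<close>
definition mf_inv :: "(real \<Rightarrow> real) \<Rightarrow> nat \<Rightarrow> complex mat \<Rightarrow> complex mat \<Rightarrow> complex mat" where
  "mf_inv f n \<rho> X = (let U = fst (eig_decomp n \<rho>); lam = snd (eig_decomp n \<rho>);
       Y = adj U * X * U in
       U * mat n n (\<lambda>(i,j). Y $$ (i,j) / complex_of_real (m_f f (lam i) (lam j))) * adj U)"

definition norm2_f :: "(real \<Rightarrow> real) \<Rightarrow> nat \<Rightarrow> complex mat \<Rightarrow> complex mat \<Rightarrow> real" where
  "norm2_f f n \<rho> X = Re (tr (adj X * mf_inv f n \<rho> X))"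

definition comm :: "complex mat \<Rightarrow> complex mat \<Rightarrow> complex mat" where
  "comm X Y = X * Y - Y * X"

definition I_f :: "(real \<Rightarrow> real) \<Rightarrow> nat \<Rightarrow> complex mat \<Rightarrow> complex mat \<Rightarrow> real" where
  "I_f f n \<rho> A = f_zero f / 2 * norm2_f f n \<rho> (\<i> \<cdot>\<^sub>m comm \<rho> A)"

text \<open>SLD: L = 2 (L_rho + R_rho)^{-1}(i[rho,A]), i.e. the unique L with rho L + L rho = 2 i[rho,A].\<close>
definition SLD :: "nat \<Rightarrow> complex mat \<Rightarrow> complex mat \<Rightarrow> complex mat" where
  "SLD n \<rho> A = (THE L. L \<in> carrier_mat n n \<and> \<rho> * L + L * \<rho> = 2 \<cdot>\<^sub>m (\<i> \<cdot>\<^sub>m comm \<rho> A))"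

definition I_SLD :: "nat \<Rightarrow> complex mat \<Rightarrow> complex mat \<Rightarrow> real" where
  "I_SLD n \<rho> A = Re (tr (\<rho> * SLD n \<rho> A * SLD n \<rho> A)) / 4"

definition mat_sqrt :: "nat \<Rightarrow> complex mat \<Rightarrow> complex mat" where
  "mat_sqrt n \<rho> = (THE S. psd_mat n S \<and> S * S = \<rho>)"

definition I_WY :: "nat \<Rightarrow> complex mat \<Rightarrow> complex mat \<Rightarrow> real" where
  "I_WY n \<rho> A = - Re (tr (comm (mat_sqrt n \<rho>) A * comm (mat_sqrt n \<rho>) A)) / 2"

end

theory Submission
  imports Defs "Jordan_Normal_Form.Schur_Decomposition" "Jordan_Normal_Form.Spectral_Radius"
begin

definition mat2 :: "complex \<Rightarrow> complex \<Rightarrow> complex \<Rightarrow> complex \<Rightarrow> complex mat" where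
  "mat2 a b c d = mat 2 2 (\<lambda>(i,j). if i = 0 then (if j = 0 then a else b) else (if j = 0 then c else d))"

lemma mat2_carrier[simp]: "mat2 a b c d \<in> carrier_mat 2 2"
  unfolding mat2_def by auto

lemma less2_cases: "(i::nat) < 2 \<Longrightarrow> i = 0 \<or> i = 1" by auto

lemma mat2_eqI: assumes "M \<in> carrier_mat 2 2" "M $$ (0,0) = a" "M $$ (0,1) = b" "M $$ (1,0) = c" "M $$ (1,1) = d"
  shows "M = mat2 a b c d"
  apply (rule eq_matI) using assms by (auto simp: mat2_def dest!: less2_cases)

lemma mat2_idx[simp]: "mat2 a b c d $$ (0,0) = a" "mat2 a b c d $$ (0,1) = b"
   "mat2 a b c d $$ (1,0) = c" "mat2 a b c d $$ (1,1) = d"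
   "mat2 a b c d $$ (0,Suc 0) = b"
   "mat2 a b c d $$ (Suc 0,0) = c" "mat2 a b c d $$ (Suc 0,Suc 0) = d"
  by (auto simp: mat2_def)

lemma sum2: "(\<Sum>i<2. g i) = g 0 + g (1::nat)"
  by (simp add: numeral_2_eq_2)
lemma sum2': "(\<Sum>i\<in>{0..<2}. g i) = g 0 + g (1::nat)"
  by (simp add: numeral_2_eq_2)

lemma mat2_mult: "mat2 a b c d * mat2 e f g h = mat2 (a*e+b*g) (a*f+b*h) (c*e+d*g) (c*f+d*h)"
  by (rule mat2_eqI, auto simp: scalar_prod_def sum2' mat2_def)

lemma mat2_minus: "mat2 a b c d - mat2 e f g h = mat2 (a-e) (b-f) (c-g) (d-h)"
  by (rule mat2_eqI, auto simp: mat2_def)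

lemma mat2_adj: "adj (mat2 a b c d) = mat2 (cnj a) (cnj c) (cnj b) (cnj d)"
  by (rule mat2_eqI, auto simp: adj_def mat2_def)

lemma mat2_diag: "mat_diag 2 g = mat2 (g 0) 0 0 (g 1)"
  by (rule mat2_eqI, auto simp: mat_diag_def)

lemma mat2_one: "1\<^sub>m 2 = mat2 1 0 0 1"
  by (rule mat2_eqI, auto)

lemma qform2: "qform 2 (mat2 a b c d) v = cnj (v 0) * a * v 0 + cnj (v 0) * b * v 1 + cnj (v 1) * c * v 0 + cnj (v 1) * d * v 1"
  by (simp add: qform_def sum2 algebra_simps)

lemma quad_nonneg:
  fixes p q r a1 b1 :: real
  assumes "p \<ge> 0" "q \<ge> 0" "p * q \<ge> r^2"
  shows "p * a1^2 + q * b1^2 + 2 * r * a1 * b1 \<ge> 0"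
proof (cases "p = 0")
  case True
  then have "r^2 \<le> 0" using assms by simp
  then have "r = 0" by simp
  then show ?thesis using True assms by simp
next
  case False
  then have pp: "p > 0" using assms by simp
  have "p * (p * a1^2 + q * b1^2 + 2 * r * a1 * b1) = (p*a1 + r*b1)^2 + (p*q - r^2) * b1^2"
    by (simp add: algebra_simps power2_eq_square)
  also have "\<dots> \<ge> 0" using assms by simp
  finally show ?thesis using pp by (simp add: zero_le_mult_iff)
qed

lemma quad_pos:
  fixes p q r a1 b1 :: real
  assumes "p > 0" "p * q > r^2" "a1 \<noteq> 0 \<or> b1 \<noteq> 0"
  shows "p * a1^2 + q * b1^2 + 2 * r * a1 * b1 > 0"
proof -
  have "p * (p * a1^2 + q * b1^2 + 2 * r * a1 * b1) = (p*a1 + r*b1)^2 + (p*q - r^2) * b1^2"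
    by (simp add: algebra_simps power2_eq_square)
  moreover have "(p*a1 + r*b1)^2 + (p*q - r^2) * b1^2 > 0"
  proof (cases "b1 = 0")
    case True
    then show ?thesis using assms by simp
  next
    case False
    then show ?thesis using assms by (simp add: add_nonneg_pos)
  qed
  ultimately have "0 < p * (p * a1^2 + q * b1^2 + 2 * r * a1 * b1)" by simp
  then show ?thesis using assms by (simp add: zero_less_mult_iff)
qed

lemma re_qform2_real:
  fixes p q r :: real
  shows "Re (qform 2 (mat2 p r r q) v) =
     (p * (Re (v 0))^2 + q * (Re (v 1))^2 + 2 * r * Re (v 0) * Re (v 1)) +
     (p * (Im (v 0))^2 + q * (Im (v 1))^2 + 2 * r * Im (v 0) * Im (v 1))"
  by (simp add: qform2 algebra_simps power2_eq_square)

lemma herm2_real: "hermitian_mat 2 (mat2 (of_real p) (of_real r) (of_real r) (of_real q))"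
  unfolding hermitian_mat_def by (simp add: mat2_adj)

lemma psd2:
  fixes p q r :: real
  assumes "p \<ge> 0" "q \<ge> 0" "p * q \<ge> r^2"
  shows "psd_mat 2 (mat2 p r r q)"
  unfolding psd_mat_def
proof (intro conjI allI)
  show "hermitian_mat 2 (mat2 p r r q)" by (rule herm2_real)
  fix v :: "nat \<Rightarrow> complex"
  have "0 \<le> p * (Re (v 0))^2 + q * (Re (v 1))^2 + 2 * r * Re (v 0) * Re (v 1)"
    by (rule quad_nonneg[OF assms])
  moreover have "0 \<le> p * (Im (v 0))^2 + q * (Im (v 1))^2 + 2 * r * Im (v 0) * Im (v 1)"
    by (rule quad_nonneg[OF assms])
  ultimately show "0 \<le> Re (qform 2 (mat2 p r r q) v)"
    unfolding re_qform2_real by linarith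
qed

lemma pd2:
  fixes p q r :: real
  assumes "p > 0" "p * q > r^2"
  shows "pd_mat 2 (mat2 p r r q)"
  unfolding pd_mat_def
proof (intro conjI allI impI)
  show "hermitian_mat 2 (mat2 p r r q)" by (rule herm2_real)
  fix v :: "nat \<Rightarrow> complex" assume "\<exists>i<2. v i \<noteq> 0"
  then have "v 0 \<noteq> 0 \<or> v 1 \<noteq> 0" using less2_cases by blast
  then have "(Re (v 0) \<noteq> 0 \<or> Re (v 1) \<noteq> 0) \<or> (Im (v 0) \<noteq> 0 \<or> Im (v 1) \<noteq> 0)"
    by (auto simp: complex_eq_iff)
  have "p * q > 0" using assms(2) by (smt (verit) zero_le_power2)
  then have q0: "q > 0" using assms(1) by (simp add: zero_less_mult_iff)
  have pq: "p * q \<ge> r^2" using assms by simp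
  let ?a = "p * (Re (v 0))^2 + q * (Re (v 1))^2 + 2 * r * Re (v 0) * Re (v 1)"
  let ?b = "p * (Im (v 0))^2 + q * (Im (v 1))^2 + 2 * r * Im (v 0) * Im (v 1)"
  have a0: "?a \<ge> 0" and b0: "?b \<ge> 0" using quad_nonneg[OF _ _ pq] assms q0 by auto
  have "?a > 0 \<or> ?b > 0" using quad_pos[OF assms] \<open>(_ \<or> _) \<or> _\<close> by blast
  then show "Re (qform 2 (mat2 p r r q) v) > 0"
    unfolding re_qform2_real using a0 b0 by linarith
qed

lemma psd_00:
  assumes "psd_mat 2 M" "M \<in> carrier_mat 2 2"
  shows "Re (M $$ (0,0)) \<ge> 0"
proof -
  from assms have "Re (qform 2 M (\<lambda>i. if i = 0 then 1 else 0)) \<ge> 0" unfolding psd_mat_def by blast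
  moreover have "qform 2 M (\<lambda>i. if i = 0 then 1 else 0) = M $$ (0,0)"
    by (simp add: qform_def sum2)
  ultimately show ?thesis by simp
qed

lemma fuzzy_concave_cs:
  fixes f :: "real \<Rightarrow> real"
  assumes om: "operator_monotone f" and x: "x > 0" and y: "y > 0"
    and cs: "c * c + s * s = 1" and e: "e > 0"
  shows "f (c * c * x + s * s * y + e) \<ge> c * c * f x + s * s * f y"
proof -
  define R where "R = mat2 c (- s) s c"
  define lam where "lam = (\<lambda>i::nat. if i = 0 then x else y)"
  define A where "A = R * mat_diag 2 (\<lambda>i. complex_of_real (lam i)) * adj R"
  define FA where "FA = R * mat_diag 2 (\<lambda>i. complex_of_real (f (lam i))) * adj R"
  define a11 where "a11 = c * c * x + s * s * y"
  define a22 where "a22 = s * s * x + c * c * y"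
  define r where "r = c * s * (x - y)"
  define al where "al = a11 + e"
  define be where "be = a22 + r^2 / e + 1"
  define B where "B = mat2 al 0 0 be"
  define FB where "FB = mat2 (f al) 0 0 (f be)"
  have cs': "complex_of_real c * complex_of_real c + complex_of_real s * complex_of_real s = 1"
    by (metis cs of_real_1 of_real_add of_real_mult)
  have unit: "unitary_mat 2 R"
    unfolding unitary_mat_def R_def mat2_adj mat2_mult mat2_one
    using cs' by (simp add: algebra_simps)
  have Aeq: "A = mat2 a11 r r a22"
    unfolding A_def R_def mat2_diag mat2_adj mat2_mult lam_def a11_def a22_def r_def
    by (simp add: algebra_simps)
  have FAeq: "FA $$ (0,0) = c * c * f x + s * s * f y"
    unfolding FA_def R_def mat2_diag mat2_adj mat2_mult lam_def
    by (simp add: algebra_simps)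
  have FAc: "FA \<in> carrier_mat 2 2" unfolding FA_def R_def by (simp add: mat2_diag mat2_adj mat2_mult)
  have cc: "c * c \<ge> 0" "s * s \<ge> 0" by auto
  have a11p: "a11 > 0" unfolding a11_def using x y cc cs
    by (smt (verit) mult_nonneg_nonneg mult_pos_pos)
  have a22p: "a22 > 0" unfolding a22_def using x y cc cs
    by (smt (verit) mult_nonneg_nonneg mult_pos_pos)
  have det: "a11 * a22 - r^2 = x * y * (c * c + s * s)^2"
    unfolding a11_def a22_def r_def
    by (simp add: algebra_simps power2_eq_square)
  then have det': "a11 * a22 - r^2 = x * y" using cs by simp
  have pdA: "pd_mat 2 A" unfolding Aeq
    by (rule pd2[OF a11p], insert det' x y, simp add: algebra_simps)
  have "r^2 / e \<ge> 0" using e by simp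
  then have albe: "0 < al" "0 < be" unfolding al_def be_def using a11p a22p e by linarith+
  have "pd_mat 2 (mat2 al (of_real 0) (of_real 0) be)"
    by (rule pd2, use albe in auto)
  then have pdB: "pd_mat 2 B" unfolding B_def by simp
  have "B - A = mat2 e (- r) (- r) (r^2/e + 1)"
    unfolding B_def Aeq mat2_minus al_def be_def by simp
  moreover have "psd_mat 2 (mat2 e (- r) (- r) (r^2/e + 1))"
  proof (rule psd2)
    show "e * (r\<^sup>2 / e + 1) \<ge> (- r)^2" using e by (simp add: field_simps)
    show "0 \<le> r\<^sup>2 / e + 1" using e by (simp add: add_nonneg_nonneg)
  qed (use e in auto)
  ultimately have psd: "psd_mat 2 (B - A)" by simp
  have mfA: "mat_fun_rel f 2 A FA" unfolding mat_fun_rel_def spectral_decomp_def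
    using unit A_def FA_def by blast
  have mfB: "mat_fun_rel f 2 B FB" unfolding mat_fun_rel_def spectral_decomp_def
  proof (intro exI conjI)
    show "unitary_mat 2 (1\<^sub>m 2)" unfolding unitary_mat_def mat2_one mat2_adj mat2_mult by simp
    let ?lb = "\<lambda>i::nat. if i = 0 then al else be"
    show "B = 1\<^sub>m 2 * mat_diag 2 (\<lambda>i. complex_of_real (?lb i)) * adj (1\<^sub>m 2)"
      unfolding B_def mat2_one mat2_diag mat2_adj mat2_mult by simp
    show "FB = 1\<^sub>m 2 * mat_diag 2 (\<lambda>i. complex_of_real (f (?lb i))) * adj (1\<^sub>m 2)"
      unfolding FB_def mat2_one mat2_diag mat2_adj mat2_mult by simp
  qed
  have "psd_mat 2 (FB - FA)" using om pdA pdB psd mfA mfB unfolding operator_monotone_def by blast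
  moreover have "FB - FA \<in> carrier_mat 2 2" using FAc unfolding FB_def by (intro minus_carrier_mat) auto
  ultimately have "Re ((FB - FA) $$ (0,0)) \<ge> 0" by (rule psd_00)
  then have "Re (FB $$ (0,0)) - Re (FA $$ (0,0)) \<ge> 0" using FAc by (simp add: FB_def)
  then show ?thesis using FAeq unfolding FB_def al_def a11_def by simp
qed

lemma fuzzy_concave:
  fixes f :: "real \<Rightarrow> real"
  assumes om: "operator_monotone f" and x: "x > 0" and y: "y > 0"
    and l: "0 \<le> l" "l \<le> 1" and e: "e > 0"
  shows "f (l * x + (1 - l) * y + e) \<ge> l * f x + (1 - l) * f y"
proof -
  have "sqrt l * sqrt l = l" "sqrt (1-l) * sqrt (1-l) = 1 - l" using l by auto
  with fuzzy_concave_cs[OF om x y _ e, of "sqrt l" "sqrt (1-l)"] show ?thesis by simp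
qed

lemma Fop_mono:
  assumes f: "f \<in> F_op" and "0 < x" "x \<le> y"
  shows "f x \<le> f y"
proof (cases "x = y")
  case False
  then have "y - x > 0" using assms by simp
  from fuzzy_concave[OF _ assms(2) assms(2), of f 1 "y - x"] f False assms
  show ?thesis by (simp add: F_op_def)
qed simp

lemma Fop_pos: "f \<in> F_op \<Longrightarrow> x > 0 \<Longrightarrow> f x > 0"
  by (simp add: F_op_def)

lemma Fop_sym: "f \<in> F_op \<Longrightarrow> t > 0 \<Longrightarrow> t * f (1/t) = f t"
  by (simp add: F_op_def)

lemma Fop_one: "f \<in> F_op \<Longrightarrow> f 1 = 1"
  by (simp add: F_op_def)

lemma Fop_zero:
  assumes f: "f \<in> F_op"
  shows "0 \<le> f_zero f" "\<And>x. x > 0 \<Longrightarrow> f_zero f \<le> f x"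
proof -
  define L where "L = Inf (f ` {0<..})"
  have bdd: "bdd_below (f ` {0<..})"
    by (rule bdd_belowI[of _ 0]) (use Fop_pos[OF f] in \<open>force intro: less_imp_le\<close>)
  have ne: "f ` {0<..} \<noteq> {}" by auto
  have low: "L \<le> f x" if "x > 0" for x
    unfolding L_def using that bdd by (intro cInf_lower) auto
  have nonneg: "0 \<le> L"
    unfolding L_def
  proof (rule cInf_greatest[OF ne])
    fix y assume "y \<in> f ` {0<..}"
    then obtain x where "x > 0" "y = f x" by auto
    then show "0 \<le> y" using Fop_pos[OF f, of x] by simp
  qed
  have "(f \<longlongrightarrow> L) (at_right 0)"
  proof (rule order_tendstoI)
    fix a assume "a < L"
    then show "eventually (\<lambda>x. a < f x) (at_right 0)"
      unfolding eventually_at_right_field using low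
      by (intro exI[of _ 1]) (auto intro: less_le_trans)
  next
    fix a assume "L < a"
    then obtain y where y: "y \<in> f ` {0<..}" "y < a" unfolding L_def
      using cInf_lessD[OF ne] by blast
    then obtain x0 where x0: "x0 > 0" "f x0 < a" by auto
    show "eventually (\<lambda>x. f x < a) (at_right 0)"
      unfolding eventually_at_right_field
    proof (intro exI[of _ x0] conjI allI impI)
      show "0 < x0" by (rule x0(1))
      fix y :: real assume "0 < y" "y < x0"
      then have "f y \<le> f x0" using Fop_mono[OF f, of y x0] by simp
      then show "f y < a" using x0(2) by simp
    qed
  qed
  then have "f_zero f = L" unfolding f_zero_def by (intro tendsto_Lim) auto
  then show "0 \<le> f_zero f" "\<And>x. x > 0 \<Longrightarrow> f_zero f \<le> f x" using low nonneg by auto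
qed

lemma Fop_upper:
  assumes f: "f \<in> F_op" and t: "t > 0"
  shows "f t \<le> (1 + t) / 2"
proof -
  have om: "operator_monotone f" using f by (simp add: F_op_def)
  define l where "l = t / (1 + t)"
  have l: "0 \<le> l" "l \<le> 1" using t by (auto simp: l_def)
  have l1: "1 - l = 1 / (1 + t)" using t by (simp add: l_def field_simps)
  have a: "l * (1/t) = 1/(1+t)" using t by (simp add: l_def)
  have b: "(1 - l) * t = t/(1+t)" using l1 by simp
  have pt: "l * (1/t) + (1 - l) * t = 1" unfolding a b using t by (simp add: add_divide_distrib[symmetric])
  have sym: "t * f (1/t) = f t" by (rule Fop_sym[OF f t])
  have key: "2 * f t / (1 + t) \<le> 1 + e" if e: "e > 0" for e
  proof -
    have a: "l * f (1/t) = f t / (1 + t)" using sym by (simp add: l_def)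
    have "2 * f t / (1 + t) = l * f (1/t) + (1 - l) * f t"
      unfolding l1 a by (simp add: add_divide_distrib[symmetric])
    also have "\<dots> \<le> f (1 + e)" using fuzzy_concave[OF om _ t l e, of "1/t"] t pt by simp
    also have "f (1 + e) = (1 + e) * f (1 / (1 + e))" using Fop_sym[OF f, of "1 + e"] e by simp
    also have "\<dots> \<le> (1 + e) * f 1"
      using Fop_mono[OF f, of "1/(1+e)" 1] e by (intro mult_left_mono) (auto simp: field_simps)
    finally show ?thesis using Fop_one[OF f] by simp
  qed
  have "2 * f t / (1 + t) \<le> 1" by (rule field_le_epsilon) (use key in auto)
  then show ?thesis using t by (simp add: field_simps)
qed

lemma Fop_lower:
  assumes f: "f \<in> F_op" and t: "t > 0"
  shows "f_zero f * (1 + t) \<le> f t"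
proof -
  have om: "operator_monotone f" using f by (simp add: F_op_def)
  define f0 where "f0 = f_zero f"
  have f0: "0 \<le> f0" "\<And>x. x > 0 \<Longrightarrow> f0 \<le> f x" using Fop_zero[OF f] by (auto simp: f0_def)
  have key: "t / (t + h) * (f0 * (1 + t) / (1 + h)) \<le> f t" if h: "0 < h" "h < 1" for h
  proof -
    define l where "l = 1 / (1 + h)"
    have l: "0 \<le> l" "l \<le> 1" using h by (auto simp: l_def)
    have l1: "1 - l = h / (1 + h)" using h by (simp add: l_def field_simps)
    have a: "l * (t * h) = t * h / (1 + h)" by (simp add: l_def)
    have b: "(1 - l) * (t / h) = t / (1 + h)" unfolding l1 using h by simp
    have "t * h / (1 + h) + t / (1 + h) = t * (1 + h) / (1 + h)"
      by (simp add: add_divide_distrib[symmetric] algebra_simps)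
    also have "\<dots> = t" using h by simp
    finally have pt: "l * (t * h) + (1 - l) * (t / h) = t" unfolding a b .
    have c: "(1 - l) * ((t / h) * f0) = t * f0 / (1 + h)" unfolding l1 using h by simp
    have "f0 * (1 + t) / (1 + h) = l * f0 + (1 - l) * ((t / h) * f0)"
      unfolding c by (simp add: l_def add_divide_distrib[symmetric] algebra_simps)
    also have "\<dots> \<le> l * f (t * h) + (1 - l) * f (t / h)"
    proof (rule add_mono)
      show "l * f0 \<le> l * f (t * h)" using l f0(2)[of "t * h"] h t by (intro mult_left_mono) auto
      have "f (t / h) = (t / h) * f (1 / (t / h))" using Fop_sym[OF f, of "t/h"] h t by simp
      also have "\<dots> \<ge> (t / h) * f0" using f0(2)[of "1 / (t/h)"] h t by (intro mult_left_mono) auto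
      finally show "(1 - l) * ((t / h) * f0) \<le> (1 - l) * f (t / h)" using l by (intro mult_left_mono) auto
    qed
    also have "\<dots> \<le> f (t + h)" using fuzzy_concave[OF om _ _ l h(1), of "t * h" "t / h"] h t pt by simp
    also have "f (t + h) = (t + h) * f (1 / (t + h))" using Fop_sym[OF f, of "t + h"] h t by simp
    also have "\<dots> \<le> (t + h) * f (1 / t)"
      using Fop_mono[OF f, of "1/(t+h)" "1/t"] h t by (intro mult_left_mono) (auto simp: field_simps)
    also have "\<dots> = (t + h) / t * f t" using Fop_sym[OF f t] t by (simp add: field_simps)
    finally have "f0 * (1 + t) / (1 + h) \<le> (t + h) / t * f t" .
    then have "t / (t + h) * (f0 * (1 + t) / (1 + h)) \<le> t / (t + h) * ((t + h) / t * f t)"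
      using h t by (intro mult_left_mono) auto
    also have "\<dots> = f t" using h t by simp
    finally show ?thesis .
  qed
  define g where "g = (\<lambda>h. t / (t + h) * (f0 * (1 + t) / (1 + h)))"
  have lim: "(\<lambda>k. g (inverse (real (Suc (Suc k))))) \<longlonglongrightarrow> g 0"
  proof -
    have "(\<lambda>k. inverse (real (Suc (Suc k)))) \<longlonglongrightarrow> 0"
      by (rule LIMSEQ_Suc[OF LIMSEQ_inverse_real_of_nat])
    moreover have "isCont g 0" unfolding g_def using t by (intro continuous_intros) auto
    ultimately show ?thesis by (rule isCont_tendsto_compose[rotated])
  qed
  have "g 0 \<le> f t"
  proof (rule LIMSEQ_le_const2[OF lim])
    show "\<exists>N. \<forall>k\<ge>N. g (inverse (real (Suc (Suc k)))) \<le> f t"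
      unfolding g_def by (intro exI[of _ 0] allI impI key) (auto simp: field_simps)
  qed
  then show ?thesis using t by (simp add: g_def f0_def)
qed


lemma mult_idx:
  assumes "A \<in> carrier_mat n k" "B \<in> carrier_mat k m" "i < n" "j < m"
  shows "(A * B) $$ (i,j) = (\<Sum>l<k. A $$ (i,l) * B $$ (l,j))"
  using assms by (auto simp: scalar_prod_def atLeast0LessThan intro!: sum.cong)

lemma mult_carrier_sq[simp]: "A \<in> carrier_mat n n \<Longrightarrow> B \<in> carrier_mat n n \<Longrightarrow> A * B \<in> carrier_mat n n"
  by simp

lemma adj_carrier[simp]: "A \<in> carrier_mat n m \<Longrightarrow> adj A \<in> carrier_mat m n"
  by (auto simp: adj_def)

lemma adj_dims[simp]: "dim_row (adj A) = dim_col A" "dim_col (adj A) = dim_row A"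
  by (auto simp: adj_def)

lemma adj_index[simp]: "i < dim_col A \<Longrightarrow> j < dim_row A \<Longrightarrow> adj A $$ (i,j) = cnj (A $$ (j,i))"
  by (auto simp: adj_def)

lemma adj_adj[simp]: "adj (adj A) = A"
  by (rule eq_matI) auto

lemma adj_mult:
  assumes "A \<in> carrier_mat n k" "B \<in> carrier_mat k m"
  shows "adj (A * B) = adj B * adj A"
proof (rule eq_matI)
  fix i j assume ij: "i < dim_row (adj B * adj A)" "j < dim_col (adj B * adj A)"
  then have i: "i < m" and j: "j < n" using assms by auto
  have "adj (A * B) $$ (i,j) = cnj ((A * B) $$ (j,i))" using assms i j by simp
  also have "\<dots> = (\<Sum>l<k. cnj (A $$ (j,l)) * cnj (B $$ (l,i)))"
    by (subst mult_idx[OF assms j i]) (simp add: cnj_sum)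
  also have "\<dots> = (adj B * adj A) $$ (i,j)"
    using assms i j by (subst mult_idx[of _ m k _ n]) (auto intro!: sum.cong simp: mult.commute)
  finally show "adj (A * B) $$ (i,j) = (adj B * adj A) $$ (i,j)" .
qed (use assms in auto)

lemma adj_one[simp]: "adj (1\<^sub>m n) = 1\<^sub>m n"
  by (rule eq_matI) auto

lemma unitary_right:
  assumes "unitary_mat n U" shows "U * adj U = 1\<^sub>m n"
  using assms mat_mult_left_right_inverse[of "adj U" n U] unfolding unitary_mat_def by auto

lemma unitary_carrier: "unitary_mat n U \<Longrightarrow> U \<in> carrier_mat n n"
  by (simp add: unitary_mat_def)

lemma cscalar_self:
  fixes w :: "complex vec"
  assumes "w \<in> carrier_vec n"
  shows "w \<bullet>c w = of_real (\<Sum>k<n. (cmod (w $ k))^2)"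
proof -
  have "\<And>x. w $ x * cnj (w $ x) = of_real ((cmod (w $ x))^2)" by (rule complex_norm_square[symmetric])
  then show ?thesis using assms by (simp add: scalar_prod_def atLeast0LessThan of_real_sum del: of_real_power)
qed

lemma normalized_unitary:
  fixes ws :: "complex vec list"
  assumes orth: "corthogonal ws" and car: "set ws \<subseteq> carrier_vec n" and len: "length ws = n"
  defines "c \<equiv> (\<lambda>j. 1 / sqrt (\<Sum>k<n. (cmod (ws ! j $ k))^2))"
  defines "W \<equiv> mat n n (\<lambda>(i,j). complex_of_real (c j) * (ws ! j $ i))"
  shows "unitary_mat n W"
  unfolding unitary_mat_def
proof
  show Wc: "W \<in> carrier_mat n n" unfolding W_def by simp
  show "adj W * W = 1\<^sub>m n"
  proof (rule eq_matI)
    fix i j assume "i < dim_row (1\<^sub>m n)" "j < dim_col (1\<^sub>m n)"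
    then have i: "i < n" and j: "j < n" by auto
    have wi: "ws ! i \<in> carrier_vec n" and wj: "ws ! j \<in> carrier_vec n" using car len i j by auto
    have "(adj W * W) $$ (i,j) = (\<Sum>l<n. cnj (W $$ (l,i)) * W $$ (l,j))"
      using Wc i j by (subst mult_idx[of _ n n _ n]) auto
    also have "\<dots> = of_real (c i) * of_real (c j) * (\<Sum>l<n. ws ! j $ l * cnj (ws ! i $ l))"
      unfolding W_def using i j by (auto simp: sum_distrib_left intro!: sum.cong)
    also have "(\<Sum>l<n. ws ! j $ l * cnj (ws ! i $ l)) = ws ! j \<bullet>c ws ! i"
      using wi wj by (simp add: scalar_prod_def atLeast0LessThan)
    finally have eq: "(adj W * W) $$ (i,j) = of_real (c i) * of_real (c j) * (ws ! j \<bullet>c ws ! i)" .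
    show "(adj W * W) $$ (i,j) = 1\<^sub>m n $$ (i,j)"
    proof (cases "i = j")
      case False
      then have "ws ! j \<bullet>c ws ! i = 0" using corthogonalD[OF orth, of j i] len i j by auto
      then show ?thesis using eq i j False by simp
    next
      case True
      have nz: "ws ! i \<bullet>c ws ! i \<noteq> 0" using corthogonalD[OF orth, of i i] len i by auto
      define N where "N = (\<Sum>k<n. (cmod (ws ! i $ k))^2)"
      have "ws ! i \<bullet>c ws ! i = of_real N" unfolding N_def by (rule cscalar_self[OF wi])
      with nz have N0: "N \<noteq> 0" by auto
      have "N \<ge> 0" unfolding N_def by (simp add: sum_nonneg)
      with N0 have Np: "N > 0" by simp
      have ci: "c i = 1 / sqrt N" unfolding c_def N_def by simp
      have "of_real (c i) * of_real (c i) * (ws ! i \<bullet>c ws ! i) = complex_of_real (c i * c i * N)"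
        using \<open>ws ! i \<bullet>c ws ! i = of_real N\<close> by simp
      also have "c i * c i * N = 1" unfolding ci using Np
        by (simp add: field_simps real_sqrt_mult[symmetric])
      finally show ?thesis using eq True i by simp
    qed
  qed (use Wc in auto)
qed

lemma orthonormal_basis_with:
  fixes v :: "complex vec"
  assumes v: "v \<in> carrier_vec n" and v0: "v \<noteq> 0\<^sub>v n"
  shows "\<exists>W c. unitary_mat n W \<and> (\<forall>k<n. W $$ (k,0) = complex_of_real c * v $ k)"
proof -
  interpret cof_vec_space n "TYPE(complex)" .
  define b where "b = basis_completion v"
  from basis_completion[OF v v0, folded b_def]
  have span_b: "span (set b) = carrier_vec n" and dist_b: "distinct b"
    and bas: "basis (set b)" and b: "set b \<subseteq> carrier_vec n" by auto
  from bas have indep: "\<not> lin_dep (set b)" unfolding basis_def by auto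
  have len_b: "length b = n"
    using bas dim_is_n distinct_card[OF dist_b] b
    by (metis basis_def dim_basis finite_set)
  have n: "n > 0"
  proof (rule ccontr)
    assume "\<not> n > 0" then have "n = 0" by simp
    then have "v = 0\<^sub>v n" using v by auto
    with v0 show False by simp
  qed
  from len_b n obtain vs where bv: "b = v # vs" unfolding b_def basis_completion_def Let_def by auto
  define ws where "ws = gram_schmidt n b"
  from gram_schmidt_result[OF b dist_b indep ws_def]
  have ws: "set ws \<subseteq> carrier_vec n" "corthogonal ws" "length ws = n" by (auto simp: len_b)
  have hd: "hd ws = v" unfolding ws_def bv using gram_schmidt_hd[OF v] by simp
  have ws0: "ws ! 0 = v" using hd ws(3) n by (metis hd_conv_nth list.size(3) not_less_zero)
  define c where "c \<equiv> (\<lambda>j. 1 / sqrt (\<Sum>k<n. (cmod (ws ! j $ k))^2))"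
  define W where "W \<equiv> mat n n (\<lambda>(i,j). complex_of_real (c j) * (ws ! j $ i))"
  have "unitary_mat n W" unfolding W_def c_def by (rule normalized_unitary[OF ws(2,1,3)])
  moreover have "\<forall>k<n. W $$ (k,0) = complex_of_real (c 0) * v $ k"
    unfolding W_def using n ws0 by auto
  ultimately show ?thesis by blast
qed

lemma hermitian_spectral:
  "hermitian_mat n A \<Longrightarrow> \<exists>U lam. spectral_decomp n A U lam"
proof (induction n arbitrary: A)
  case 0
  then have A: "A \<in> carrier_mat 0 0" unfolding hermitian_mat_def by auto
  show ?case unfolding spectral_decomp_def unitary_mat_def
    by (rule exI[of _ "1\<^sub>m 0"], rule exI[of _ "\<lambda>_. 0"]) (use A in \<open>auto intro!: eq_matI\<close>)
next
  case (Suc m A)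
  let ?n = "Suc m"
  have A: "A \<in> carrier_mat ?n ?n" and hA: "adj A = A" using Suc.prems unfolding hermitian_mat_def by auto
  from spectrum_non_empty[OF A] obtain e where "eigenvalue A e" unfolding spectrum_def by auto
  from find_eigenvector[OF A this] have "eigenvector A (find_eigenvector A e) e" .
  then obtain v where v: "v \<in> carrier_vec ?n" "v \<noteq> 0\<^sub>v ?n" and Av: "A *\<^sub>v v = e \<cdot>\<^sub>v v"
    unfolding eigenvector_def using A by auto
  from orthonormal_basis_with[OF v] obtain W c where
    uW: "unitary_mat ?n W" and W0: "\<forall>k<?n. W $$ (k,0) = complex_of_real c * v $ k" by blast
  have W: "W \<in> carrier_mat ?n ?n" using uW unitary_carrier by blast
  have WW: "adj W * W = 1\<^sub>m ?n" using uW unfolding unitary_mat_def by simp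
  have WW': "W * adj W = 1\<^sub>m ?n" using unitary_right[OF uW] .
  define A' where "A' = adj W * A * W"
  have A'c: "A' \<in> carrier_mat ?n ?n" unfolding A'_def using W A by auto
  have hA': "adj A' = A'" unfolding A'_def using W A hA
    by (simp add: adj_mult[of _ ?n ?n _ ?n] assoc_mult_mat[of _ ?n ?n _ ?n _ ?n])
  have AW0: "(A * W) $$ (k,0) = e * W $$ (k,0)" if k: "k < ?n" for k
  proof -
    have "(A * W) $$ (k,0) = (\<Sum>l<?n. A $$ (k,l) * W $$ (l,0))" by (rule mult_idx[OF A W k]) simp
    also have "\<dots> = of_real c * (\<Sum>l<?n. A $$ (k,l) * v $ l)"
      using W0 by (simp add: sum_distrib_left algebra_simps)
    also have "(\<Sum>l<?n. A $$ (k,l) * v $ l) = (A *\<^sub>v v) $ k"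
      using A v k by (simp add: scalar_prod_def atLeast0LessThan)
    also have "\<dots> = e * v $ k" using Av k v by simp
    finally show ?thesis using W0 k by simp
  qed
  have A'0: "A' $$ (i,0) = (if i = 0 then e else 0)" if i: "i < ?n" for i
  proof -
    have "A' $$ (i,0) = (adj W * (A * W)) $$ (i,0)" unfolding A'_def using W A
      by (simp add: assoc_mult_mat[of _ ?n ?n _ ?n _ ?n])
    also have "\<dots> = (\<Sum>l<?n. adj W $$ (i,l) * (A * W) $$ (l,0))"
      using W A i by (subst mult_idx[of _ ?n ?n _ ?n]) auto
    also have "\<dots> = e * (\<Sum>l<?n. adj W $$ (i,l) * W $$ (l,0))"
      using AW0 by (simp add: sum_distrib_left algebra_simps)
    also have "(\<Sum>l<?n. adj W $$ (i,l) * W $$ (l,0)) = (adj W * W) $$ (i,0)"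
      using W i by (subst mult_idx[of _ ?n ?n _ ?n]) auto
    also have "\<dots> = (if i = 0 then 1 else 0)" using WW i by simp
    finally show ?thesis by simp
  qed
  have A'r0: "A' $$ (0,j) = cnj (A' $$ (j,0))" if j: "j < ?n" for j
  proof -
    have "A' $$ (0,j) = adj A' $$ (0,j)" using hA' by simp
    also have "\<dots> = cnj (A' $$ (j,0))" using A'c j by simp
    finally show ?thesis .
  qed
  have ereal: "cnj e = e" using A'r0[of 0] A'0[of 0] by simp
  have A'r: "A' $$ (0,j) = (if j = 0 then e else 0)" if j: "j < ?n" for j
    using A'r0[OF j] A'0[OF j] ereal by auto
  have "Im e = 0" using arg_cong[OF ereal, of Im] by simp
  then have eRe: "complex_of_real (Re e) = e" by (simp add: complex_eq_iff)
  define A3 where "A3 = mat m m (\<lambda>(i,j). A' $$ (Suc i, Suc j))"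
  have hA3: "hermitian_mat m A3" unfolding hermitian_mat_def
  proof
    show "A3 \<in> carrier_mat m m" unfolding A3_def by simp
    show "adj A3 = A3"
    proof (rule eq_matI)
      fix i j assume "i < dim_row A3" "j < dim_col A3"
      then have i: "i < m" and j: "j < m" unfolding A3_def by auto
      have "adj A3 $$ (i,j) = cnj (A' $$ (Suc j, Suc i))" unfolding A3_def using i j by simp
      also have "\<dots> = adj A' $$ (Suc i, Suc j)" using A'c i j by simp
      finally show "adj A3 $$ (i,j) = A3 $$ (i,j)" unfolding A3_def using hA' i j by simp
    qed (auto simp: A3_def)
  qed
  from Suc.IH[OF hA3] obtain U3 lam3 where sd3: "spectral_decomp m A3 U3 lam3" by blast
  then have uU3: "unitary_mat m U3" and A3eq: "A3 = U3 * mat_diag m (\<lambda>i. complex_of_real (lam3 i)) * adj U3"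
    unfolding spectral_decomp_def by auto
  have U3: "U3 \<in> carrier_mat m m" using uU3 unitary_carrier by blast
  have U3U3: "adj U3 * U3 = 1\<^sub>m m" using uU3 unfolding unitary_mat_def by simp
  define U' where "U' = mat ?n ?n (\<lambda>(i,j). if i = 0 then (if j = 0 then 1 else 0)
       else if j = 0 then 0 else U3 $$ (i - 1, j - 1))"
  define lam where "lam = (\<lambda>i. if i = 0 then Re e else lam3 (i - 1))"
  have U'c: "U' \<in> carrier_mat ?n ?n" unfolding U'_def by simp
  have U'U': "adj U' * U' = 1\<^sub>m ?n"
  proof (rule eq_matI)
    fix i j assume "i < dim_row (1\<^sub>m ?n)" "j < dim_col (1\<^sub>m ?n)"
    then have i: "i < ?n" and j: "j < ?n" by auto
    have "(adj U' * U') $$ (i,j) = (\<Sum>l<?n. cnj (U' $$ (l,i)) * U' $$ (l,j))"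
      using U'c i j by (subst mult_idx[of _ ?n ?n _ ?n]) auto
    also have "\<dots> = cnj (U' $$ (0,i)) * U' $$ (0,j) + (\<Sum>l<m. cnj (U' $$ (Suc l,i)) * U' $$ (Suc l,j))"
      by (rule sum.lessThan_Suc_shift)
    also have "\<dots> = 1\<^sub>m ?n $$ (i,j)"
    proof (cases i)
      case 0
      then show ?thesis using i j unfolding U'_def by auto
    next
      case (Suc i')
      note i' = this
      show ?thesis
      proof (cases j)
        case 0
        then show ?thesis using i j i' unfolding U'_def by auto
      next
        case (Suc j')
        have "(\<Sum>l<m. cnj (U' $$ (Suc l,i)) * U' $$ (Suc l,j)) = (\<Sum>l<m. cnj (U3 $$ (l,i')) * U3 $$ (l,j'))"
          unfolding U'_def using i j i' Suc by (intro sum.cong) auto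
        also have "\<dots> = (adj U3 * U3) $$ (i',j')"
          using U3 i j i' Suc by (subst mult_idx[of _ m m _ m]) auto
        finally show ?thesis using U3U3 i j i' Suc unfolding U'_def by auto
      qed
    qed
    finally show "(adj U' * U') $$ (i,j) = 1\<^sub>m ?n $$ (i,j)" .
  qed (use U'c in auto)
  define D where "D = mat_diag ?n (\<lambda>i. complex_of_real (lam i))"
  have Dc: "D \<in> carrier_mat ?n ?n" unfolding D_def by simp
  have A'eq: "A' = U' * D * adj U'"
  proof (rule eq_matI)
    fix i j assume "i < dim_row (U' * D * adj U')" "j < dim_col (U' * D * adj U')"
    then have i: "i < ?n" and j: "j < ?n" using U'c Dc by auto
    have UD: "U' * D = mat ?n ?n (\<lambda>(i,j). U' $$ (i,j) * complex_of_real (lam j))"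
      unfolding D_def by (rule mat_diag_mult_right[OF U'c])
    have "(U' * D * adj U') $$ (i,j) = (\<Sum>l<?n. U' $$ (i,l) * of_real (lam l) * cnj (U' $$ (j,l)))"
      unfolding UD using U'c i j by (subst mult_idx[of _ ?n ?n _ ?n]) auto
    also have "\<dots> = U' $$ (i,0) * of_real (lam 0) * cnj (U' $$ (j,0)) +
        (\<Sum>l<m. U' $$ (i,Suc l) * of_real (lam (Suc l)) * cnj (U' $$ (j,Suc l)))"
      by (rule sum.lessThan_Suc_shift)
    also have "\<dots> = A' $$ (i,j)"
    proof (cases i)
      case 0
      then show ?thesis using i j A'r[OF j] eRe unfolding U'_def lam_def by auto
    next
      case (Suc i')
      note i' = this
      show ?thesis
      proof (cases j)
        case 0
        then show ?thesis using i j i' A'0[OF i] unfolding U'_def by auto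
      next
        case (Suc j')
        have "(\<Sum>l<m. U' $$ (i,Suc l) * of_real (lam (Suc l)) * cnj (U' $$ (j,Suc l)))
            = (\<Sum>l<m. U3 $$ (i',l) * of_real (lam3 l) * cnj (U3 $$ (j',l)))"
          unfolding U'_def lam_def using i j i' Suc by (intro sum.cong) auto
        also have "\<dots> = (U3 * mat_diag m (\<lambda>i. complex_of_real (lam3 i)) * adj U3) $$ (i',j')"
          using U3 i j i' Suc
          by (subst mat_diag_mult_right[OF U3], subst mult_idx[of _ m m _ m]) auto
        also have "\<dots> = A3 $$ (i',j')" using A3eq by simp
        also have "\<dots> = A' $$ (i,j)" unfolding A3_def using i j i' Suc by simp
        finally show ?thesis using i j i' Suc unfolding U'_def by auto
      qed
    qed
    finally show "A' $$ (i,j) = (U' * D * adj U') $$ (i,j)" by simp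
  qed (use U'c Dc A'c in auto)
  define U where "U = W * U'"
  have Uc: "U \<in> carrier_mat ?n ?n" unfolding U_def using W U'c by simp
  have adjU: "adj U = adj U' * adj W" unfolding U_def by (rule adj_mult[OF W U'c])
  have uU: "unitary_mat ?n U" unfolding unitary_mat_def
  proof
    show "U \<in> carrier_mat ?n ?n" by (rule Uc)
    have "adj U * U = (adj U' * adj W) * (W * U')" by (simp only: adjU) (simp add: U_def)
    also have "\<dots> = adj U' * (adj W * (W * U'))"
      by (rule assoc_mult_mat[of _ ?n ?n _ ?n _ ?n]) (use W U'c in auto)
    also have "adj W * (W * U') = (adj W * W) * U'"
      by (rule assoc_mult_mat[symmetric, of _ ?n ?n _ ?n _ ?n]) (use W U'c in auto)
    also have "\<dots> = U'" using WW U'c by simp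
    finally show "adj U * U = 1\<^sub>m ?n" using U'U' by simp
  qed
  have "A = (W * adj W) * A * (W * adj W)" using WW' A by simp
  also have "\<dots> = W * A' * adj W" unfolding A'_def using W A
    by (simp add: assoc_mult_mat[of _ ?n ?n _ ?n _ ?n])
  also have "\<dots> = W * (U' * D * adj U') * adj W" using A'eq by simp
  also have "\<dots> = (W * U') * D * (adj U' * adj W)" using W U'c Dc
    by (simp add: assoc_mult_mat[of _ ?n ?n _ ?n _ ?n])
  also have "\<dots> = U * D * adj U" by (simp only: adjU) (simp add: U_def)
  finally have "A = U * D * adj U" .
  then show ?case unfolding spectral_decomp_def D_def using uU by blast
qed


lemma minus_sq[simp]: "A \<in> carrier_mat n n \<Longrightarrow> B \<in> carrier_mat n n \<Longrightarrow> A - B \<in> carrier_mat n n"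
  by (rule minus_carrier_mat)
lemma add_sq[simp]: "A \<in> carrier_mat n n \<Longrightarrow> B \<in> carrier_mat n n \<Longrightarrow> A + B \<in> carrier_mat n n"
  by simp
lemma smult_sq[simp]: "A \<in> carrier_mat n n \<Longrightarrow> c \<cdot>\<^sub>m A \<in> carrier_mat n n"
  by simp
lemma adj_index_sq: "A \<in> carrier_mat n n \<Longrightarrow> i < n \<Longrightarrow> j < n \<Longrightarrow> adj A $$ (i,j) = cnj (A $$ (j,i))"
  by simp

lemma row_col:
  assumes "A \<in> carrier_mat n k" "B \<in> carrier_mat k m" "i < n" "j < m"
  shows "row A i \<bullet> col B j = (\<Sum>l<k. A $$ (i,l) * B $$ (l,j))"
  using mult_idx[OF assms] assms by simp

lemma tr_mult_comm:
  assumes A: "A \<in> carrier_mat n k" and B: "B \<in> carrier_mat k n"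
  shows "tr (A * B) = tr (B * A)"
proof -
  have "tr (A * B) = (\<Sum>i<n. \<Sum>l<k. A $$ (i,l) * B $$ (l,i))"
    unfolding tr_def using A B by (auto simp: row_col[OF A B] intro!: sum.cong)
  also have "\<dots> = (\<Sum>l<k. \<Sum>i<n. B $$ (l,i) * A $$ (i,l))"
    by (subst sum.swap) (simp add: mult.commute)
  also have "\<dots> = tr (B * A)"
    unfolding tr_def using A B by (auto simp: row_col[OF B A] intro!: sum.cong)
  finally show ?thesis .
qed

lemma tr_entries:
  assumes A: "A \<in> carrier_mat n n" and B: "B \<in> carrier_mat n n"
  shows "tr (A * B) = (\<Sum>i<n. \<Sum>l<n. A $$ (i,l) * B $$ (l,i))"
  unfolding tr_def using A B by (auto simp: row_col[OF A B] intro!: sum.cong)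

locale uctx =
  fixes n :: nat and U :: "complex mat"
  assumes uU: "unitary_mat n U"
begin

lemma Uc[simp]: "U \<in> carrier_mat n n" using uU unitary_carrier by blast
lemma UU[simp]: "adj U * U = 1\<^sub>m n" using uU unitary_mat_def by blast
lemma UU'[simp]: "U * adj U = 1\<^sub>m n" using unitary_right[OF uU] .

lemma UUZ[simp]: "Z \<in> carrier_mat n n \<Longrightarrow> U * (adj U * Z) = Z"
  by (simp flip: assoc_mult_mat[of U n n "adj U" n Z n])
lemma UUZ'[simp]: "Z \<in> carrier_mat n n \<Longrightarrow> adj U * (U * Z) = Z"
  by (simp flip: assoc_mult_mat[of "adj U" n n U n Z n])

definition cj :: "complex mat \<Rightarrow> complex mat" where
  "cj X = adj U * X * U"

lemma cj_carrier[simp]: "X \<in> carrier_mat n n \<Longrightarrow> cj X \<in> carrier_mat n n"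
  unfolding cj_def by simp

lemma cj_mult: "X \<in> carrier_mat n n \<Longrightarrow> Y \<in> carrier_mat n n \<Longrightarrow> cj (X * Y) = cj X * cj Y"
  unfolding cj_def by (simp add: assoc_mult_mat[of _ n n _ n _ n])

lemma cj_minus: "X \<in> carrier_mat n n \<Longrightarrow> Y \<in> carrier_mat n n \<Longrightarrow> cj (X - Y) = cj X - cj Y"
  unfolding cj_def
  by (simp add: mult_minus_distrib_mat[of _ n n _ n] minus_mult_distrib_mat[of _ n n _ _ n])

lemma cj_add: "X \<in> carrier_mat n n \<Longrightarrow> Y \<in> carrier_mat n n \<Longrightarrow> cj (X + Y) = cj X + cj Y"
  unfolding cj_def
  by (simp add: mult_add_distrib_mat[of _ n n _ n] add_mult_distrib_mat[of _ n n _ _ n])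

lemma cj_smult: "X \<in> carrier_mat n n \<Longrightarrow> cj (c \<cdot>\<^sub>m X) = c \<cdot>\<^sub>m cj X"
  unfolding cj_def
  by (simp add: mult_smult_distrib[of _ n n _ n] mult_smult_assoc_mat[of _ n n _ n])

lemma uncj: "X \<in> carrier_mat n n \<Longrightarrow> U * cj X * adj U = X"
  unfolding cj_def by (simp add: assoc_mult_mat[of _ n n _ n _ n])

lemma cj_inj: "X \<in> carrier_mat n n \<Longrightarrow> Y \<in> carrier_mat n n \<Longrightarrow> cj X = cj Y \<Longrightarrow> X = Y"
  by (metis uncj)

lemma cj_of: "M \<in> carrier_mat n n \<Longrightarrow> cj (U * M * adj U) = M"
  unfolding cj_def by (simp add: assoc_mult_mat[of _ n n _ n _ n])

lemma tr_cj: "X \<in> carrier_mat n n \<Longrightarrow> tr (cj X) = tr X"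
proof -
  assume X: "X \<in> carrier_mat n n"
  have "tr (cj X) = tr ((adj U * X) * U)" unfolding cj_def ..
  also have "\<dots> = tr (U * (adj U * X))" by (rule tr_mult_comm[of _ n n]) (use X in auto)
  also have "\<dots> = tr X" using X by simp
  finally show ?thesis .
qed

lemma adj_cj: "X \<in> carrier_mat n n \<Longrightarrow> adj (cj X) = cj (adj X)"
  unfolding cj_def by (simp add: adj_mult[of _ n n _ n] assoc_mult_mat[of _ n n _ n _ n])

end


locale sctx = uctx +
  fixes lam :: "nat \<Rightarrow> real" and rho A :: "complex mat"
  assumes rho: "rho = U * mat_diag n (\<lambda>i. complex_of_real (lam i)) * adj U"
    and lampos: "\<And>i. i < n \<Longrightarrow> lam i > 0"
    and hA: "hermitian_mat n A"
begin

definition "D = mat_diag n (\<lambda>i. complex_of_real (lam i))"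
definition "B = cj A"
definition "C = \<i> \<cdot>\<^sub>m comm rho A"
definition "Y = cj C"

lemma Dc[simp]: "D \<in> carrier_mat n n" unfolding D_def by simp
lemma Ac[simp]: "A \<in> carrier_mat n n" using hA unfolding hermitian_mat_def by simp
lemma rhoc[simp]: "rho \<in> carrier_mat n n" unfolding rho by simp
lemma Bc[simp]: "B \<in> carrier_mat n n" unfolding B_def by simp
lemma Cc[simp]: "C \<in> carrier_mat n n" unfolding C_def comm_def by simp
lemma Yc[simp]: "Y \<in> carrier_mat n n" unfolding Y_def by simp

lemma dims[simp]: "dim_row D = n" "dim_col D = n" "dim_row B = n" "dim_col B = n"
  "dim_row Y = n" "dim_col Y = n" "dim_row C = n" "dim_col C = n" "dim_row A = n" "dim_col A = n"
  "dim_row rho = n" "dim_col rho = n"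
  using Dc Bc Yc Cc Ac rhoc by (auto simp del: Dc Bc Yc Cc Ac rhoc)

lemma cj_rho: "cj rho = D" unfolding rho D_def by (rule cj_of) simp

lemma D_left: "X \<in> carrier_mat n n \<Longrightarrow> i < n \<Longrightarrow> j < n \<Longrightarrow> (D * X) $$ (i,j) = of_real (lam i) * X $$ (i,j)"
  unfolding D_def by (subst mat_diag_mult_left[of _ n n]) auto

lemma D_right: "X \<in> carrier_mat n n \<Longrightarrow> i < n \<Longrightarrow> j < n \<Longrightarrow> (X * D) $$ (i,j) = X $$ (i,j) * of_real (lam j)"
  unfolding D_def by (subst mat_diag_mult_right[of _ n n]) auto

lemma B_herm: "i < n \<Longrightarrow> j < n \<Longrightarrow> B $$ (j,i) = cnj (B $$ (i,j))"
proof -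
  assume ij: "i < n" "j < n"
  have "adj B = B" unfolding B_def using adj_cj[of A] hA unfolding hermitian_mat_def by simp
  then have "B $$ (j,i) = adj B $$ (j,i)" by simp
  also have "\<dots> = cnj (B $$ (i,j))" using ij by (simp add: adj_index_sq)
  finally show ?thesis .
qed

lemma Y_eq: "Y = \<i> \<cdot>\<^sub>m (D * B - B * D)"
  unfolding Y_def C_def comm_def B_def
  by (simp add: cj_smult cj_minus cj_mult cj_rho del: dims)

lemma Y_idx: "i < n \<Longrightarrow> j < n \<Longrightarrow> Y $$ (i,j) = \<i> * of_real (lam i - lam j) * B $$ (i,j)"
  unfolding Y_eq using D_left[of B i j] D_right[of B i j] by (simp add: algebra_simps)

lemma tr_cj_form:
  assumes Z: "Z \<in> carrier_mat n n"
  shows "tr (adj C * (U * Z * adj U)) = tr (adj Y * Z)"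
proof -
  have "tr (adj C * (U * Z * adj U)) = tr (cj (adj C * (U * Z * adj U)))"
    using Z by (simp add: tr_cj)
  also have "cj (adj C * (U * Z * adj U)) = adj Y * Z"
    using Z by (simp add: cj_mult[of "adj C" "U * Z * adj U"] cj_of adj_cj Y_def)
  finally show ?thesis .
qed

end


lemma triple_idx:
  assumes V: "V \<in> carrier_mat n n" and M: "M \<in> carrier_mat n n" and i: "i < n" and j: "j < n"
  shows "(adj V * M * V) $$ (i,j) = (\<Sum>a<n. \<Sum>b<n. cnj (V $$ (a,i)) * M $$ (a,b) * V $$ (b,j))"
proof -
  have "(adj V * M * V) $$ (i,j) = (\<Sum>b<n. (adj V * M) $$ (i,b) * V $$ (b,j))"
    using V M i j by (subst mult_idx[of _ n n _ n]) auto
  also have "\<dots> = (\<Sum>b<n. (\<Sum>a<n. cnj (V $$ (a,i)) * M $$ (a,b)) * V $$ (b,j))"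
    using V M i j by (intro sum.cong refl, subst mult_idx[of _ n n _ n]) auto
  also have "\<dots> = (\<Sum>b<n. \<Sum>a<n. cnj (V $$ (a,i)) * M $$ (a,b) * V $$ (b,j))"
    by (simp add: sum_distrib_right)
  also have "\<dots> = (\<Sum>a<n. \<Sum>b<n. cnj (V $$ (a,i)) * M $$ (a,b) * V $$ (b,j))"
    by (rule sum.swap)
  finally show ?thesis .
qed

lemma sum_prod3: "(\<Sum>i\<in>I. f i) * c * (\<Sum>j\<in>J. g j) = (\<Sum>i\<in>I. \<Sum>j\<in>J. f i * c * (g j :: complex))"
proof -
  have "(\<Sum>i\<in>I. f i) * c * (\<Sum>j\<in>J. g j) = (\<Sum>i\<in>I. f i * c * (\<Sum>j\<in>J. g j))"
    by (simp only: sum_distrib_right)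
  also have "\<dots> = (\<Sum>i\<in>I. \<Sum>j\<in>J. f i * c * g j)"
    by (simp only: sum_distrib_left)
  finally show ?thesis .
qed

lemma sum_mid2: "(x::complex) * (\<Sum>a\<in>I. \<Sum>b\<in>J. f a b) * y = (\<Sum>a\<in>I. \<Sum>b\<in>J. x * f a b * y)"
  by (simp add: sum_distrib_left sum_distrib_right)

lemma qform_transform:
  assumes V: "V \<in> carrier_mat n n" and M: "M \<in> carrier_mat n n"
  shows "qform n (adj V * M * V) v = qform n M (\<lambda>a. \<Sum>i<n. V $$ (a,i) * v i)"
proof -
  have "qform n (adj V * M * V) v = (\<Sum>i<n. \<Sum>j<n. cnj (v i) *
      (\<Sum>a<n. \<Sum>b<n. cnj (V $$ (a,i)) * M $$ (a,b) * V $$ (b,j)) * v j)"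
    unfolding qform_def
    by (rule sum.cong[OF refl], rule sum.cong[OF refl]) (simp add: triple_idx[OF V M])
  also have "\<dots> = (\<Sum>i<n. \<Sum>j<n. \<Sum>a<n. \<Sum>b<n. cnj (V $$ (a,i) * v i) * M $$ (a,b) * (V $$ (b,j) * v j))"
    unfolding sum_mid2 by (simp add: mult_ac)
  also have "\<dots> = (\<Sum>a<n. \<Sum>b<n. \<Sum>i<n. \<Sum>j<n. cnj (V $$ (a,i) * v i) * M $$ (a,b) * (V $$ (b,j) * v j))"
  proof -
    have "(\<Sum>i<n. \<Sum>j<n. \<Sum>a<n. \<Sum>b<n. cnj (V $$ (a,i) * v i) * M $$ (a,b) * (V $$ (b,j) * v j))
        = (\<Sum>i<n. \<Sum>a<n. \<Sum>j<n. \<Sum>b<n. cnj (V $$ (a,i) * v i) * M $$ (a,b) * (V $$ (b,j) * v j))"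
      by (rule sum.cong[OF refl], rule sum.swap)
    also have "\<dots> = (\<Sum>a<n. \<Sum>i<n. \<Sum>j<n. \<Sum>b<n. cnj (V $$ (a,i) * v i) * M $$ (a,b) * (V $$ (b,j) * v j))"
      by (rule sum.swap)
    also have "\<dots> = (\<Sum>a<n. \<Sum>i<n. \<Sum>b<n. \<Sum>j<n. cnj (V $$ (a,i) * v i) * M $$ (a,b) * (V $$ (b,j) * v j))"
      by (rule sum.cong[OF refl], rule sum.cong[OF refl], rule sum.swap)
    also have "\<dots> = (\<Sum>a<n. \<Sum>b<n. \<Sum>i<n. \<Sum>j<n. cnj (V $$ (a,i) * v i) * M $$ (a,b) * (V $$ (b,j) * v j))"
      by (rule sum.cong[OF refl], rule sum.swap)
    finally show ?thesis .
  qed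
  also have "\<dots> = qform n M (\<lambda>a. \<Sum>i<n. V $$ (a,i) * v i)"
    unfolding qform_def cnj_sum sum_prod3 ..
  finally show ?thesis .
qed

lemma qform_diag:
  "qform n (mat_diag n (\<lambda>i. complex_of_real (d i))) w = (\<Sum>i<n. of_real (d i) * (cnj (w i) * w i))"
  unfolding qform_def
proof (rule sum.cong[OF refl])
  fix i assume i: "i \<in> {..<n}"
  have "(\<Sum>j<n. cnj (w i) * mat_diag n (\<lambda>i. complex_of_real (d i)) $$ (i, j) * w j)
      = (\<Sum>j<n. if i = j then cnj (w i) * of_real (d i) * w i else 0)"
    using i by (intro sum.cong refl) (auto simp: mat_diag_def)
  also have "\<dots> = of_real (d i) * (cnj (w i) * w i)" using i by simp
  finally show "(\<Sum>j<n. cnj (w i) * mat_diag n (\<lambda>i. complex_of_real (d i)) $$ (i, j) * w j) = of_real (d i) * (cnj (w i) * w i)" .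
qed

lemma cnj_mult_self: "cnj z * z = complex_of_real ((cmod z)^2)"
  by (subst complex_norm_square) (rule mult.commute)

lemma Re_qform_diag:
  "Re (qform n (mat_diag n (\<lambda>i. complex_of_real (d i))) w) = (\<Sum>i<n. d i * (cmod (w i))^2)"
  unfolding qform_diag cnj_mult_self by (simp flip: of_real_mult)

lemma qform_add: "M \<in> carrier_mat n n \<Longrightarrow> N \<in> carrier_mat n n \<Longrightarrow>
   qform n (M + N) w = qform n M w + qform n N w"
proof -
  assume M: "M \<in> carrier_mat n n" and N: "N \<in> carrier_mat n n"
  have "qform n (M + N) w = (\<Sum>i<n. \<Sum>j<n. cnj (w i) * M $$ (i,j) * w j + cnj (w i) * N $$ (i,j) * w j)"
    unfolding qform_def using M N by (intro sum.cong refl) (simp add: algebra_simps)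
  then show ?thesis unfolding qform_def by (simp add: sum.distrib)
qed

lemma qform_mult_vec:
  assumes P: "P \<in> carrier_mat n n"
  shows "qform n P w = (\<Sum>i<n. cnj (w i) * (\<Sum>k<n. P $$ (i,k) * w k))"
  unfolding qform_def by (simp add: sum_distrib_left mult.assoc)


context sctx begin

lemma cmod_Y_sq: "i < n \<Longrightarrow> j < n \<Longrightarrow> (cmod (Y $$ (i,j)))^2 = (lam i - lam j)^2 * (cmod (B $$ (i,j)))^2"
  by (simp add: Y_idx norm_mult power_mult_distrib del: of_real_diff)

lemma norm2_val:
  assumes eig: "eig_decomp n rho = (U, lam)"
  shows "norm2_f f n rho C = (\<Sum>i<n. \<Sum>l<n. (lam l - lam i)^2 * (cmod (B $$ (l,i)))^2 / m_f f (lam l) (lam i))"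
proof -
  define Z where "Z = mat n n (\<lambda>(i,j). Y $$ (i,j) / complex_of_real (m_f f (lam i) (lam j)))"
  have Zc: "Z \<in> carrier_mat n n" unfolding Z_def by simp
  have mf: "mf_inv f n rho C = U * Z * adj U"
    unfolding mf_inv_def eig Z_def Y_def cj_def Let_def by simp
  have "norm2_f f n rho C = Re (tr (adj Y * Z))"
    unfolding norm2_f_def mf using tr_cj_form[OF Zc] by simp
  also have "tr (adj Y * Z) = (\<Sum>i<n. \<Sum>l<n. adj Y $$ (i,l) * Z $$ (l,i))"
    using Zc by (simp add: tr_entries[of _ n])
  also have "\<dots> = (\<Sum>i<n. \<Sum>l<n. complex_of_real ((lam l - lam i)^2 * (cmod (B $$ (l,i)))^2 / m_f f (lam l) (lam i)))"
  proof (intro sum.cong refl)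
    fix i l assume i: "i \<in> {..<n}" and l: "l \<in> {..<n}"
    have "adj Y $$ (i,l) * Z $$ (l,i) = cnj (Y $$ (l,i)) * Y $$ (l,i) / complex_of_real (m_f f (lam l) (lam i))"
      using i l unfolding Z_def by (simp add: adj_index_sq)
    also have "\<dots> = complex_of_real ((cmod (Y $$ (l,i)))^2 / m_f f (lam l) (lam i))"
      by (simp add: cnj_mult_self)
    also have "\<dots> = complex_of_real ((lam l - lam i)^2 * (cmod (B $$ (l,i)))^2 / m_f f (lam l) (lam i))"
      using i l by (simp only: cmod_Y_sq lessThan_iff)
    finally show "adj Y $$ (i,l) * Z $$ (l,i) = complex_of_real ((lam l - lam i)^2 * (cmod (B $$ (l,i)))^2 / m_f f (lam l) (lam i))" .
  qed
  also have "Re \<dots> = (\<Sum>i<n. \<Sum>l<n. (lam l - lam i)^2 * (cmod (B $$ (l,i)))^2 / m_f f (lam l) (lam i))"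
    by (simp add: Re_sum)
  finally show ?thesis .
qed

definition "K = mat n n (\<lambda>(i,j). 2 * Y $$ (i,j) / complex_of_real (lam i + lam j))"

lemma Kc[simp]: "K \<in> carrier_mat n n" unfolding K_def by simp

lemma K_idx: "i < n \<Longrightarrow> j < n \<Longrightarrow> K $$ (i,j) = 2 * Y $$ (i,j) / complex_of_real (lam i + lam j)"
  unfolding K_def by simp

lemma sld_char:
  assumes L: "L \<in> carrier_mat n n"
  shows "(rho * L + L * rho = 2 \<cdot>\<^sub>m (\<i> \<cdot>\<^sub>m comm rho A)) \<longleftrightarrow> cj L = K"
proof -
  have lhs: "cj (rho * L + L * rho) = D * cj L + cj L * D"
    using L by (simp add: cj_add cj_mult cj_rho)
  have rhs: "cj (2 \<cdot>\<^sub>m (\<i> \<cdot>\<^sub>m comm rho A)) = 2 \<cdot>\<^sub>m Y"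
    unfolding Y_def C_def[symmetric] using cj_smult[of C 2] by simp
  have ent: "(D * cj L + cj L * D) $$ (i,j) = of_real (lam i + lam j) * cj L $$ (i,j)"
    if "i < n" "j < n" for i j
    using that L D_left[of "cj L" i j] D_right[of "cj L" i j] carrier_matD[OF cj_carrier[OF L]]
    by (simp add: algebra_simps)
  have pos: "complex_of_real (lam i + lam j) \<noteq> 0" if "i < n" "j < n" for i j
  proof -
    have "lam i + lam j \<noteq> 0" using lampos[OF that(1)] lampos[OF that(2)] by linarith
    then show ?thesis using of_real_eq_0_iff by blast
  qed
  show ?thesis
  proof
    assume eq: "rho * L + L * rho = 2 \<cdot>\<^sub>m (\<i> \<cdot>\<^sub>m comm rho A)"
    have E: "D * cj L + cj L * D = 2 \<cdot>\<^sub>m Y" using arg_cong[OF eq, of cj] lhs rhs by simp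
    show "cj L = K"
    proof (rule eq_matI)
      fix i j assume "i < dim_row K" "j < dim_col K"
      then have i: "i < n" and j: "j < n" by (auto simp: K_def)
      have "of_real (lam i + lam j) * cj L $$ (i,j) = 2 * Y $$ (i,j)"
        using ent[OF i j] arg_cong[OF E, of "\<lambda>M. M $$ (i,j)"] i j by simp
      then show "cj L $$ (i,j) = K $$ (i,j)" unfolding K_def using i j pos[OF i j]
        by (simp add: field_simps)
    qed (use L carrier_matD[OF cj_carrier[OF L]] in \<open>auto simp: K_def\<close>)
  next
    assume eq: "cj L = K"
    have "cj (rho * L + L * rho) = cj (2 \<cdot>\<^sub>m (\<i> \<cdot>\<^sub>m comm rho A))"
      unfolding lhs rhs
    proof (rule eq_matI)
      fix i j assume "i < dim_row (2 \<cdot>\<^sub>m Y)" "j < dim_col (2 \<cdot>\<^sub>m Y)"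
      then have i: "i < n" and j: "j < n" by auto
      show "(D * cj L + cj L * D) $$ (i,j) = (2 \<cdot>\<^sub>m Y) $$ (i,j)"
      proof -
        have "(D * cj L + cj L * D) $$ (i,j) = of_real (lam i + lam j) * K $$ (i,j)"
          using ent[OF i j] eq by simp
        also have "\<dots> = 2 * Y $$ (i,j)" using K_idx[OF i j] pos[OF i j] by simp
        finally show ?thesis using i j by simp
      qed
    qed (use L carrier_matD[OF cj_carrier[OF L]] in auto)
    note cjeq = this
    show "rho * L + L * rho = 2 \<cdot>\<^sub>m (\<i> \<cdot>\<^sub>m comm rho A)"
      by (intro cj_inj[OF _ _ cjeq]) (use L in \<open>auto simp: comm_def\<close>)
  qed
qed

lemma SLD_eq: "SLD n rho A = U * K * adj U"
  unfolding SLD_def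
proof (rule the_equality)
  show "U * K * adj U \<in> carrier_mat n n \<and> rho * (U * K * adj U) + U * K * adj U * rho = 2 \<cdot>\<^sub>m (\<i> \<cdot>\<^sub>m comm rho A)"
    using sld_char[of "U * K * adj U"] by (simp add: cj_of)
  fix L assume "L \<in> carrier_mat n n \<and> rho * L + L * rho = 2 \<cdot>\<^sub>m (\<i> \<cdot>\<^sub>m comm rho A)"
  then have L: "L \<in> carrier_mat n n" and "cj L = K" using sld_char by auto
  then show "L = U * K * adj U" using uncj[OF L] by simp
qed

lemma YY: "i < n \<Longrightarrow> l < n \<Longrightarrow> Y $$ (i,l) * Y $$ (l,i) = of_real ((lam i - lam l)^2 * (cmod (B $$ (i,l)))^2)"
proof -
  assume i: "i < n" and l: "l < n"
  have "Y $$ (i,l) * Y $$ (l,i) = (\<i> * \<i>) * (of_real (lam i - lam l) * of_real (lam l - lam i)) * (B $$ (i,l) * cnj (B $$ (i,l)))"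
    using i l by (simp add: Y_idx B_herm[of i l] mult_ac)
  also have "B $$ (i,l) * cnj (B $$ (i,l)) = of_real ((cmod (B $$ (i,l)))^2)"
    by (simp add: cnj_mult_self mult.commute[of "B $$ (i,l)"])
  finally show ?thesis by (simp add: power2_eq_square algebra_simps)
qed

lemma I_SLD_val:
  "I_SLD n rho A = (\<Sum>i<n. \<Sum>l<n. lam i * (lam i - lam l)^2 * (cmod (B $$ (i,l)))^2 / (lam i + lam l)^2)"
proof -
  define L where "L = U * K * adj U"
  have Lc: "L \<in> carrier_mat n n" unfolding L_def by simp
  have "tr (rho * L * L) = tr (cj (rho * L * L))" using Lc by (simp add: tr_cj)
  have cjL: "cj L = K" unfolding L_def by (rule cj_of) simp
  have "cj (rho * L * L) = D * K * K"
    using Lc by (simp add: cj_mult cj_rho cjL)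
  note tr1 = \<open>tr (rho * L * L) = tr (cj (rho * L * L))\<close>[unfolded this]
  have "tr (rho * L * L) = tr (D * K * K)" by (rule tr1)
  also have "tr (D * K * K) = (\<Sum>i<n. \<Sum>l<n. (D * K) $$ (i,l) * K $$ (l,i))"
    by (simp add: tr_entries[of _ n])
  also have "\<dots> = (\<Sum>i<n. \<Sum>l<n. of_real (4 * (lam i * (lam i - lam l)^2 * (cmod (B $$ (i,l)))^2 / (lam i + lam l)^2)))"
  proof (intro sum.cong refl)
    fix i l assume i: "i \<in> {..<n}" and l: "l \<in> {..<n}"
    have "(D * K) $$ (i,l) * K $$ (l,i) = of_real (lam i) * (2 * Y $$ (i,l) / of_real (lam i + lam l)) * (2 * Y $$ (l,i) / of_real (lam l + lam i))"
      using i l by (simp add: D_left K_idx del: index_mult_mat of_real_add)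
    also have "\<dots> = 4 * of_real (lam i) * (Y $$ (i,l) * Y $$ (l,i)) / (of_real (lam i + lam l))^2"
      by (simp add: power2_eq_square add.commute[of "lam l"] field_simps)
    also have "\<dots> = of_real (4 * (lam i * (lam i - lam l)^2 * (cmod (B $$ (i,l)))^2 / (lam i + lam l)^2))"
      using i l by (simp add: YY)
    finally show "(D * K) $$ (i,l) * K $$ (l,i) = of_real (4 * (lam i * (lam i - lam l)^2 * (cmod (B $$ (i,l)))^2 / (lam i + lam l)^2))" .
  qed
  finally have "tr (rho * L * L) = \<dots>" .
  then have "Re (tr (rho * L * L)) = (\<Sum>i<n. \<Sum>l<n. 4 * (lam i * (lam i - lam l)^2 * (cmod (B $$ (i,l)))^2 / (lam i + lam l)^2))"
    by (simp only: Re_sum Re_complex_of_real)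
  also have "\<dots> = 4 * (\<Sum>i<n. \<Sum>l<n. lam i * (lam i - lam l)^2 * (cmod (B $$ (i,l)))^2 / (lam i + lam l)^2)"
    by (simp only: sum_distrib_left)
  finally show ?thesis unfolding I_SLD_def SLD_eq L_def[symmetric] by simp
qed

end


context sctx begin

definition "R = mat_diag n (\<lambda>i. complex_of_real (sqrt (lam i)))"
definition "S0 = U * R * adj U"

lemma Rc[simp]: "R \<in> carrier_mat n n" unfolding R_def by simp
lemma Rdims[simp]: "dim_row R = n" "dim_col R = n" unfolding R_def by (auto simp: mat_diag_def)
lemma S0c[simp]: "S0 \<in> carrier_mat n n" unfolding S0_def by simp

lemma R_left: "X \<in> carrier_mat n n \<Longrightarrow> i < n \<Longrightarrow> j < n \<Longrightarrow> (R * X) $$ (i,j) = of_real (sqrt (lam i)) * X $$ (i,j)"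
  unfolding R_def by (subst mat_diag_mult_left[of _ n n]) auto

lemma R_right: "X \<in> carrier_mat n n \<Longrightarrow> i < n \<Longrightarrow> j < n \<Longrightarrow> (X * R) $$ (i,j) = X $$ (i,j) * of_real (sqrt (lam j))"
  unfolding R_def by (subst mat_diag_mult_right[of _ n n]) auto

lemma R_idx: "i < n \<Longrightarrow> j < n \<Longrightarrow> R $$ (i,j) = (if i = j then of_real (sqrt (lam i)) else 0)"
  unfolding R_def mat_diag_def by auto

lemma D_idx: "i < n \<Longrightarrow> j < n \<Longrightarrow> D $$ (i,j) = (if i = j then of_real (lam i) else 0)"
  unfolding D_def mat_diag_def by auto

lemma RR: "R * R = D"
proof (rule eq_matI)
  fix i j assume "i < dim_row D" "j < dim_col D"
  then have i: "i < n" and j: "j < n" by auto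
  have "lam i \<ge> 0" "lam j \<ge> 0" using lampos[OF i] lampos[OF j] by simp_all
  then show "(R * R) $$ (i,j) = D $$ (i,j)"
    using R_left[of R i j] i j by (simp add: R_idx D_idx flip: of_real_mult)
qed simp_all

lemma adj_add_sq: "X \<in> carrier_mat n n \<Longrightarrow> Z \<in> carrier_mat n n \<Longrightarrow> adj (X + Z) = adj X + adj Z"
  by (rule eq_matI) auto

lemma adj_zero_sq: "adj (0\<^sub>m n n :: complex mat) = 0\<^sub>m n n"
  by (rule eq_matI) auto

lemma adjR: "adj R = R"
  by (rule eq_matI) (auto simp: R_def mat_diag_def)

lemma adjD: "adj D = D"
  by (rule eq_matI) (auto simp: D_def mat_diag_def)

lemma cjS0: "cj S0 = R" unfolding S0_def by (rule cj_of) simp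

lemma S0S0: "S0 * S0 = rho"
proof (rule cj_inj)
  show "cj (S0 * S0) = cj rho" by (simp add: cj_mult cjS0 RR cj_rho)
qed auto

lemma herm_of_cj: "X \<in> carrier_mat n n \<Longrightarrow> adj (cj X) = cj X \<Longrightarrow> adj X = X"
  by (metis adj_cj adj_carrier cj_inj)

lemma psd_S0: "psd_mat n S0"
  unfolding psd_mat_def hermitian_mat_def
proof (intro conjI allI)
  show "S0 \<in> carrier_mat n n" by simp
  show "adj S0 = S0" by (rule herm_of_cj) (simp_all add: adj_cj[symmetric] cjS0 adjR)
  fix v
  have "S0 = adj (adj U) * R * adj U" unfolding S0_def by simp
  then have "qform n S0 v = qform n R (\<lambda>a. \<Sum>i<n. adj U $$ (a,i) * v i)"
    using qform_transform[of "adj U" n R v] by simp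
  also have "Re \<dots> \<ge> 0" unfolding R_def Re_qform_diag
  proof (intro sum_nonneg)
    fix x assume "x \<in> {..<n}"
    then have "lam x > 0" using lampos by simp
    then show "0 \<le> sqrt (lam x) * (cmod (\<Sum>i<n. adj U $$ (x, i) * v i))\<^sup>2" by simp
  qed
  finally show "0 \<le> Re (qform n S0 v)" .
qed

lemma sqrt_unique:
  assumes psd: "psd_mat n S" and SS: "S * S = rho"
  shows "S = S0"
proof -
  have Sc: "S \<in> carrier_mat n n" and hS: "adj S = S" using psd unfolding psd_mat_def hermitian_mat_def by auto
  define T where "T = cj S"
  have Tc: "T \<in> carrier_mat n n" unfolding T_def using Sc by simp
  have hT: "adj T = T" unfolding T_def using Sc hS by (simp add: adj_cj)
  have TT: "T * T = D" unfolding T_def using Sc by (simp add: cj_mult[symmetric] SS cj_rho)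
  have qT: "Re (qform n T w) \<ge> 0" for w
  proof -
    have "qform n T w = qform n S (\<lambda>a. \<Sum>i<n. U $$ (a,i) * w i)"
      unfolding T_def cj_def using qform_transform[OF Uc Sc] by simp
    then show ?thesis using psd unfolding psd_mat_def by simp
  qed
  have TD: "T * D = D * T"
  proof -
    have "T * D = T * (T * T)" by (simp add: TT)
    also have "\<dots> = (T * T) * T" using Tc by (simp add: assoc_mult_mat[of _ n n _ n _ n])
    finally show ?thesis by (simp add: TT)
  qed
  have TR_ent: "T $$ (i,j) * of_real (sqrt (lam j)) = of_real (sqrt (lam i)) * T $$ (i,j)"
    if i: "i < n" and j: "j < n" for i j
  proof (cases "T $$ (i,j) = 0")
    case False
    have "T $$ (i,j) * of_real (lam j) = of_real (lam i) * T $$ (i,j)"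
      using arg_cong[OF TD, of "\<lambda>M. M $$ (i,j)"] D_left[OF Tc i j] D_right[OF Tc i j] by simp
    then have "lam j = lam i" using False by (simp add: mult.commute)
    then show ?thesis by (simp add: mult.commute)
  qed simp
  have TR: "T * R = R * T"
  proof (rule eq_matI)
    fix i j assume "i < dim_row (R * T)" "j < dim_col (R * T)"
    then have i: "i < n" and j: "j < n" using Tc by auto
    show "(T * R) $$ (i,j) = (R * T) $$ (i,j)"
      using TR_ent[OF i j] R_left[OF Tc i j] R_right[OF Tc i j] by simp
  qed (use Tc in auto)
  define X where "X = T - R"
  define P where "P = T + R"
  have Xc: "X \<in> carrier_mat n n" and Pc: "P \<in> carrier_mat n n" unfolding X_def P_def using Tc by auto
  have XP: "X * P = 0\<^sub>m n n"
  proof -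
    have "X * P = (T * T + T * R) - (R * T + R * R)"
      unfolding X_def P_def
      using minus_mult_distrib_mat[OF Tc Rc add_sq[OF Tc Rc]]
        mult_add_distrib_mat[OF Tc Tc Rc] mult_add_distrib_mat[OF Rc Tc Rc]
      by simp
    also have "\<dots> = (D + R * T) - (R * T + D)" by (simp add: TT TR RR)
    also have "\<dots> = 0\<^sub>m n n" using Tc by (intro eq_matI) auto
    finally show ?thesis .
  qed
  have hP: "adj P = P" unfolding P_def
    by (simp only: adj_add_sq[OF Tc Rc] hT adjR)
  have PX: "P * adj X = 0\<^sub>m n n"
  proof -
    have "adj (X * P) = adj P * adj X" by (rule adj_mult[OF Xc Pc])
    then show ?thesis by (simp only: XP hP adj_zero_sq)
  qed
  have col0: "adj X $$ (k,j) = 0" if k: "k < n" and j: "j < n" for k j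
  proof -
    define w where "w = (\<lambda>k. adj X $$ (k,j))"
    have Pw: "(\<Sum>k<n. P $$ (i,k) * w k) = 0" if i: "i < n" for i
    proof -
      have "(\<Sum>k<n. P $$ (i,k) * w k) = (P * adj X) $$ (i,j)"
        unfolding w_def using Pc Xc i j by (subst mult_idx[of _ n n _ n]) auto
      then show ?thesis using PX i j by simp
    qed
    have "qform n P w = 0" unfolding qform_mult_vec[OF Pc] using Pw by simp
    then have "qform n T w + qform n R w = 0"
      unfolding P_def using qform_add[OF Tc Rc] by simp
    then have "Re (qform n T w + qform n R w) = 0" by simp
    then have "Re (qform n T w) + Re (qform n R w) = 0" by simp
    then have "Re (qform n R w) \<le> 0" using qT[of w] by simp
    then have sum0: "(\<Sum>i<n. sqrt (lam i) * (cmod (w i))^2) \<le> 0"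
      unfolding R_def Re_qform_diag .
    have nn: "\<forall>i\<in>{..<n}. 0 \<le> sqrt (lam i) * (cmod (w i))^2"
    proof
      fix i assume "i \<in> {..<n}"
      then have "lam i > 0" using lampos by simp
      then show "0 \<le> sqrt (lam i) * (cmod (w i))^2" by simp
    qed
    have nn': "\<And>i. i \<in> {..<n} \<Longrightarrow> 0 \<le> sqrt (lam i) * (cmod (w i))^2" using nn by blast
    have "0 \<le> (\<Sum>i<n. sqrt (lam i) * (cmod (w i))^2)" using nn' by (rule sum_nonneg)
    then have "(\<Sum>i<n. sqrt (lam i) * (cmod (w i))^2) = 0" using sum0 by simp
    moreover have "(\<Sum>i<n. sqrt (lam i) * (cmod (w i))^2) = 0 \<longleftrightarrow> (\<forall>i\<in>{..<n}. sqrt (lam i) * (cmod (w i))^2 = 0)"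
      by (rule sum_nonneg_eq_0_iff[OF finite_lessThan nn'])
    ultimately have "\<forall>i\<in>{..<n}. sqrt (lam i) * (cmod (w i))^2 = 0" by blast
    then have "sqrt (lam k) * (cmod (w k))^2 = 0" using k by simp
    then show ?thesis using lampos[OF k] unfolding w_def by simp
  qed
  have "X = 0\<^sub>m n n"
  proof (rule eq_matI)
    fix i j assume "i < dim_row (0\<^sub>m n n :: complex mat)" "j < dim_col (0\<^sub>m n n :: complex mat)"
    then have i: "i < n" and j: "j < n" by auto
    have "X $$ (i,j) = cnj (adj X $$ (j,i))" using Xc i j by (simp add: adj_index_sq)
    then show "X $$ (i,j) = 0\<^sub>m n n $$ (i,j)" using col0[OF j i] i j by simp
  qed (use Xc in auto)
  then have "T = R"
  proof -
    assume X0: "X = 0\<^sub>m n n"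
    show "T = R"
    proof (rule eq_matI)
      fix i j assume "i < dim_row R" "j < dim_col R"
      then have i: "i < n" and j: "j < n" by auto
      have "X $$ (i,j) = 0" using X0 i j by simp
      then show "T $$ (i,j) = R $$ (i,j)" unfolding X_def using Tc i j by simp
    qed (use Tc in auto)
  qed
  then have "cj S = cj S0" unfolding T_def by (simp add: cjS0)
  then show "S = S0" by (rule cj_inj[OF Sc S0c])
qed

lemma mat_sqrt_eq: "mat_sqrt n rho = S0"
  unfolding mat_sqrt_def
proof (rule the_equality)
  show "psd_mat n S0 \<and> S0 * S0 = rho" using psd_S0 S0S0 by simp
  fix S assume "psd_mat n S \<and> S * S = rho" then show "S = S0" using sqrt_unique by blast
qed

end


context sctx begin

definition "E = R * B - B * R"

lemma Ec[simp]: "E \<in> carrier_mat n n" unfolding E_def by simp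

lemma cj_comm: "cj (comm S0 A) = E"
  unfolding comm_def E_def B_def by (simp add: cj_minus cj_mult cjS0)

lemma E_idx: "i < n \<Longrightarrow> l < n \<Longrightarrow> E $$ (i,l) = of_real (sqrt (lam i) - sqrt (lam l)) * B $$ (i,l)"
  unfolding E_def using R_left[of B i l] R_right[of B i l] by (simp add: algebra_simps)

lemma neg_sq_aux: "complex_of_real d * complex_of_real (- d) * complex_of_real c = - complex_of_real (d^2 * c)"
  by (simp add: power2_eq_square)

lemma sq_aux: "(s::real) > 0 \<Longrightarrow> s * (X / s^2) = 2 * (X / (2 * s))"
  by (simp add: power2_eq_square field_simps)

lemma EE: "i < n \<Longrightarrow> l < n \<Longrightarrow> E $$ (i,l) * E $$ (l,i) = - of_real ((sqrt (lam i) - sqrt (lam l))^2 * (cmod (B $$ (i,l)))^2)"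
proof -
  assume i: "i < n" and l: "l < n"
  have "E $$ (i,l) * E $$ (l,i) = (of_real (sqrt (lam i) - sqrt (lam l)) * of_real (sqrt (lam l) - sqrt (lam i))) * (B $$ (i,l) * cnj (B $$ (i,l)))"
    using i l by (simp add: E_idx B_herm[of i l] mult_ac)
  also have "B $$ (i,l) * cnj (B $$ (i,l)) = of_real ((cmod (B $$ (i,l)))^2)"
    by (simp add: cnj_mult_self mult.commute[of "B $$ (i,l)"])
  also have "sqrt (lam l) - sqrt (lam i) = - (sqrt (lam i) - sqrt (lam l))" by simp
  also have "complex_of_real (sqrt (lam i) - sqrt (lam l)) * complex_of_real (- (sqrt (lam i) - sqrt (lam l))) *
      complex_of_real ((cmod (B $$ (i,l)))^2) = - of_real ((sqrt (lam i) - sqrt (lam l))^2 * (cmod (B $$ (i,l)))^2)"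
    by (rule neg_sq_aux)
  finally show ?thesis .
qed

lemma I_WY_val:
  "I_WY n rho A = (\<Sum>i<n. \<Sum>l<n. (sqrt (lam i) - sqrt (lam l))^2 * (cmod (B $$ (i,l)))^2) / 2"
proof -
  have cc: "comm S0 A \<in> carrier_mat n n" unfolding comm_def by simp
  have "tr (comm S0 A * comm S0 A) = tr (cj (comm S0 A * comm S0 A))" using cc by (simp add: tr_cj)
  also have "cj (comm S0 A * comm S0 A) = E * E" using cc by (simp add: cj_mult cj_comm)
  also have "tr (E * E) = (\<Sum>i<n. \<Sum>l<n. E $$ (i,l) * E $$ (l,i))" by (simp add: tr_entries[of _ n])
  also have "\<dots> = (\<Sum>i<n. \<Sum>l<n. - of_real ((sqrt (lam i) - sqrt (lam l))^2 * (cmod (B $$ (i,l)))^2))"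
    by (intro sum.cong refl) (simp add: EE)
  finally have "Re (tr (comm S0 A * comm S0 A)) = - (\<Sum>i<n. \<Sum>l<n. (sqrt (lam i) - sqrt (lam l))^2 * (cmod (B $$ (i,l)))^2)"
    by (simp only: Re_sum uminus_complex.sel Re_complex_of_real sum_negf)
  then show ?thesis unfolding I_WY_def mat_sqrt_eq by simp
qed

lemma w_sym: "i < n \<Longrightarrow> l < n \<Longrightarrow> cmod (B $$ (l,i)) = cmod (B $$ (i,l))"
  by (simp add: B_herm[of i l])

lemma I_SLD_sym:
  "I_SLD n rho A = (\<Sum>i<n. \<Sum>l<n. (lam i - lam l)^2 * (cmod (B $$ (i,l)))^2 / (2 * (lam i + lam l)))"
proof -
  define h where "h = (\<lambda>i l. (lam i - lam l)^2 * (cmod (B $$ (i,l)))^2 / (lam i + lam l)^2)"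
  have hs: "h l i = h i l" if "i < n" "l < n" for i l
    unfolding h_def using w_sym[OF that] by (simp add: power2_commute add.commute)
  have S: "I_SLD n rho A = (\<Sum>i<n. \<Sum>l<n. lam i * h i l)"
    unfolding I_SLD_val h_def by (intro sum.cong refl) (simp add: mult.assoc)
  also have "\<dots> = (\<Sum>l<n. \<Sum>i<n. lam i * h i l)" by (rule sum.swap)
  also have "\<dots> = (\<Sum>i<n. \<Sum>l<n. lam l * h i l)"
    by (intro sum.cong refl) (simp add: hs)
  finally have S2: "I_SLD n rho A = (\<Sum>i<n. \<Sum>l<n. lam l * h i l)" .
  have "2 * I_SLD n rho A = (\<Sum>i<n. \<Sum>l<n. lam i * h i l) + (\<Sum>i<n. \<Sum>l<n. lam l * h i l)"
    using S S2 by (simp only: mult_2)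
  also have "\<dots> = (\<Sum>i<n. \<Sum>l<n. lam i * h i l + lam l * h i l)" by (simp only: sum.distrib)
  also have "\<dots> = (\<Sum>i<n. \<Sum>l<n. (lam i + lam l) * h i l)" by (simp only: distrib_right)
  also have "\<dots> = (\<Sum>i<n. \<Sum>l<n. 2 * ((lam i - lam l)^2 * (cmod (B $$ (i,l)))^2 / (2 * (lam i + lam l))))"
  proof (intro sum.cong refl)
    fix i l assume "i \<in> {..<n}" "l \<in> {..<n}"
    then have "lam i + lam l > 0" using lampos by (simp add: add_pos_pos)
    then show "(lam i + lam l) * h i l = 2 * ((lam i - lam l)^2 * (cmod (B $$ (i,l)))^2 / (2 * (lam i + lam l)))"
      unfolding h_def by (rule sq_aux)
  qed
  also have "\<dots> = 2 * (\<Sum>i<n. \<Sum>l<n. (lam i - lam l)^2 * (cmod (B $$ (i,l)))^2 / (2 * (lam i + lam l)))"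
    by (simp only: sum_distrib_left)
  finally show ?thesis by simp
qed

lemma norm2_sym:
  assumes eig: "eig_decomp n rho = (U, lam)"
  shows "norm2_f f n rho C = (\<Sum>i<n. \<Sum>l<n. (lam i - lam l)^2 * (cmod (B $$ (i,l)))^2 / m_f f (lam i) (lam l))"
  unfolding norm2_val[OF eig] by (rule sum.swap)

end


lemma term1:
  fixes f0 s m d :: real
  assumes "f0 > 0" "s > 0" "f0 * s \<le> m" "d \<ge> 0"
  shows "f0 / 2 * (d / m) \<le> d / (2 * s)"
proof -
  have fs: "f0 * s > 0" using assms by simp
  have m: "m > 0" using fs assms by linarith
  have "d / m \<le> d / (f0 * s)" using assms fs m by (intro divide_left_mono) auto
  then have "f0 / 2 * (d / m) \<le> f0 / 2 * (d / (f0 * s))" using assms by (intro mult_left_mono) auto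
  also have "\<dots> = d / (2 * s)" using assms by (simp add: field_simps)
  finally show ?thesis .
qed

lemma term2:
  fixes f0 s m d :: real
  assumes "f0 > 0" "m > 0" "m \<le> s / 2" "d \<ge> 0"
  shows "d / (2 * s) \<le> 1 / (2 * f0) * (f0 / 2 * (d / m))"
proof -
  have "d / (2 * s) \<le> d / (4 * m)" using assms by (intro divide_left_mono) auto
  also have "\<dots> = 1 / (2 * f0) * (f0 / 2 * (d / m))" using assms by (simp add: field_simps)
  finally show ?thesis .
qed

lemma wy_term:
  fixes a b w :: real
  assumes a: "a > 0" and b: "b > 0" and w: "w \<ge> 0"
  shows "(a - b)^2 * w / 2 \<le> (a^2 - b^2)^2 * w / (2 * (a^2 + b^2))"
    and "(a^2 - b^2)^2 * w / (2 * (a^2 + b^2)) \<le> 2 * ((a - b)^2 * w / 2)"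
proof -
  define q where "q = (a - b)^2 * w"
  have q: "q \<ge> 0" unfolding q_def using w by simp
  have p: "a^2 + b^2 > 0" using a b by (simp add: add_pos_pos)
  have eq: "(a^2 - b^2)^2 * w / (2 * (a^2 + b^2)) = q / 2 * ((a + b)^2 / (a^2 + b^2))"
    unfolding q_def using p by (simp add: power2_eq_square field_simps)
  have k1: "1 \<le> (a + b)^2 / (a^2 + b^2)" using a b p by (simp add: field_simps power2_eq_square)
  have k2: "(a + b)^2 / (a^2 + b^2) \<le> 2"
  proof -
    have "(a + b)^2 \<le> 2 * (a^2 + b^2)" using sum_squares_ge_zero[of "a - b" 0]
      by (simp add: power2_eq_square algebra_simps)
    then show ?thesis using p by (simp add: field_simps)
  qed
  show "(a - b)^2 * w / 2 \<le> (a^2 - b^2)^2 * w / (2 * (a^2 + b^2))"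
    unfolding eq using mult_left_mono[OF k1, of "q/2"] q by (simp add: q_def)
  show "(a^2 - b^2)^2 * w / (2 * (a^2 + b^2)) \<le> 2 * ((a - b)^2 * w / 2)"
    unfolding eq using mult_left_mono[OF k2, of "q/2"] q by (simp add: q_def)
qed

context sctx begin

lemma ineq_f:
  assumes eig: "eig_decomp n rho = (U, lam)" and f: "f \<in> F_op_r"
  shows "I_f f n rho A \<le> I_SLD n rho A \<and> I_SLD n rho A \<le> 1 / (2 * f_zero f) * I_f f n rho A"
proof -
  have fF: "f \<in> F_op" and f0nz: "f_zero f \<noteq> 0" using f unfolding F_op_r_def by auto
  define f0 where "f0 = f_zero f"
  have f0: "f0 > 0" using Fop_zero(1)[OF fF] f0nz unfolding f0_def by simp
  define d where "d = (\<lambda>i l. (lam i - lam l)^2 * (cmod (B $$ (i,l)))^2)"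
  define m where "m = (\<lambda>i l. m_f f (lam i) (lam l))"
  have dnn: "d i l \<ge> 0" for i l unfolding d_def by simp
  have mb: "f0 * (lam i + lam l) \<le> m i l \<and> m i l \<le> (lam i + lam l) / 2 \<and> m i l > 0"
    if i: "i < n" and l: "l < n" for i l
  proof -
    have x: "lam i > 0" and y: "lam l > 0" using lampos i l by auto
    define t where "t = lam l / lam i"
    have t: "t > 0" unfolding t_def using x y by simp
    have mt: "m i l = lam i * f t" unfolding m_def m_f_def t_def ..
    have li: "lam i * (1 + t) = lam i + lam l" unfolding t_def using x by (simp add: field_simps)
    have "f0 * (1 + t) \<le> f t" using Fop_lower[OF fF t] unfolding f0_def .
    then have "lam i * (f0 * (1 + t)) \<le> lam i * f t" using x by (intro mult_left_mono) auto
    then have A1: "f0 * (lam i + lam l) \<le> m i l" unfolding mt using li by (simp add: algebra_simps)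
    have "f t \<le> (1 + t) / 2" by (rule Fop_upper[OF fF t])
    then have "lam i * f t \<le> lam i * ((1 + t) / 2)" using x by (intro mult_left_mono) auto
    then have A2: "m i l \<le> (lam i + lam l) / 2" unfolding mt using li by (simp add: algebra_simps)
    have A3: "m i l > 0" unfolding mt using x Fop_pos[OF fF t] by simp
    show ?thesis using A1 A2 A3 by simp
  qed
  have If: "I_f f n rho A = (\<Sum>i<n. \<Sum>l<n. f0 / 2 * (d i l / m i l))"
    unfolding I_f_def C_def[symmetric] norm2_sym[OF eig] f0_def[symmetric] d_def m_def
    by (simp add: sum_distrib_left)
  have Is: "I_SLD n rho A = (\<Sum>i<n. \<Sum>l<n. d i l / (2 * (lam i + lam l)))"
    unfolding I_SLD_sym d_def ..
  have If2: "1 / (2 * f_zero f) * I_f f n rho A = (\<Sum>i<n. \<Sum>l<n. 1 / (2 * f0) * (f0 / 2 * (d i l / m i l)))"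
    unfolding If f0_def[symmetric] by (simp add: sum_distrib_left)
  have "I_f f n rho A \<le> I_SLD n rho A"
    unfolding If Is
  proof (intro sum_mono)
    fix i l assume "i \<in> {..<n}" "l \<in> {..<n}"
    then have i: "i < n" and l: "l < n" by auto
    have "lam i + lam l > 0" using lampos[OF i] lampos[OF l] by simp
    then show "f0 / 2 * (d i l / m i l) \<le> d i l / (2 * (lam i + lam l))"
      using term1[OF f0 _ _ dnn] mb[OF i l] by blast
  qed
  moreover have "I_SLD n rho A \<le> 1 / (2 * f_zero f) * I_f f n rho A"
    unfolding If2 Is
  proof (intro sum_mono)
    fix i l assume "i \<in> {..<n}" "l \<in> {..<n}"
    then have i: "i < n" and l: "l < n" by auto
    show "d i l / (2 * (lam i + lam l)) \<le> 1 / (2 * f0) * (f0 / 2 * (d i l / m i l))"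
      using term2[OF f0 _ _ dnn] mb[OF i l] by blast
  qed
  ultimately show ?thesis by simp
qed

lemma ineq_wy: "I_WY n rho A \<le> I_SLD n rho A \<and> I_SLD n rho A \<le> 2 * I_WY n rho A"
proof -
  define s where "s = (\<lambda>i. sqrt (lam i))"
  define w where "w = (\<lambda>i l. (cmod (B $$ (i,l)))^2)"
  have lam_s: "lam i = (s i)^2" if "i < n" for i
    unfolding s_def using lampos[OF that] by simp
  have spos: "s i > 0" if "i < n" for i unfolding s_def using lampos[OF that] by simp
  have Iw: "I_WY n rho A = (\<Sum>i<n. \<Sum>l<n. (s i - s l)^2 * w i l / 2)"
    unfolding I_WY_val s_def w_def by (simp add: sum_divide_distrib)
  have Is: "I_SLD n rho A = (\<Sum>i<n. \<Sum>l<n. ((s i)^2 - (s l)^2)^2 * w i l / (2 * ((s i)^2 + (s l)^2)))"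
    unfolding I_SLD_sym w_def using lam_s by (intro sum.cong refl) auto
  have I2: "2 * I_WY n rho A = (\<Sum>i<n. \<Sum>l<n. 2 * ((s i - s l)^2 * w i l / 2))"
    unfolding Iw by (simp add: sum_distrib_left)
  have "I_WY n rho A \<le> I_SLD n rho A" unfolding Iw Is
    by (intro sum_mono wy_term(1)) (auto simp: spos w_def)
  moreover have "I_SLD n rho A \<le> 2 * I_WY n rho A" unfolding I2 Is
    by (intro sum_mono wy_term(2)) (auto simp: spos w_def)
  ultimately show ?thesis by simp
qed

end


lemma lam_pos_of_pd:
  assumes pd: "pd_mat n rho" and sd: "spectral_decomp n rho U lam" and i: "i < n"
  shows "lam i > 0"
proof -
  have uU: "unitary_mat n U" and rho: "rho = U * mat_diag n (\<lambda>i. complex_of_real (lam i)) * adj U"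
    using sd unfolding spectral_decomp_def by auto
  interpret uctx n U by (unfold_locales) (rule uU)
  define Dm where "Dm = mat_diag n (\<lambda>i. complex_of_real (lam i))"
  have Dmc: "Dm \<in> carrier_mat n n" unfolding Dm_def by simp
  define v where "v = (\<lambda>k. U $$ (k,i))"
  have vec: "(\<Sum>k<n. adj U $$ (a,k) * v k) = (if a = i then 1 else 0)" if a: "a < n" for a
  proof -
    have "(\<Sum>k<n. adj U $$ (a,k) * v k) = (adj U * U) $$ (a,i)"
      unfolding v_def using a i by (subst mult_idx[of _ n n _ n]) auto
    then show ?thesis using a i by simp
  qed
  have "rho = adj (adj U) * Dm * adj U" unfolding rho Dm_def by simp
  then have "qform n rho v = qform n Dm (\<lambda>a. \<Sum>k<n. adj U $$ (a,k) * v k)"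
    using qform_transform[of "adj U" n Dm v] Dmc by simp
  then have "Re (qform n rho v) = Re (qform n Dm (\<lambda>a. \<Sum>k<n. adj U $$ (a,k) * v k))" by simp
  also have "\<dots> = (\<Sum>a<n. lam a * (cmod (\<Sum>k<n. adj U $$ (a,k) * v k))^2)"
    unfolding Dm_def by (rule Re_qform_diag)
  also have "\<dots> = (\<Sum>a<n. if a = i then lam a else 0)"
    by (intro sum.cong refl) (simp add: vec)
  also have "\<dots> = lam i" using i by simp
  finally have q: "Re (qform n rho v) = lam i" .
  have "\<exists>k<n. v k \<noteq> 0"
  proof (rule ccontr)
    assume "\<not> (\<exists>k<n. v k \<noteq> 0)"
    then have "\<forall>k<n. v k = 0" by simp
    then have "(\<Sum>k<n. adj U $$ (i,k) * v k) = 0" by simp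
    with vec[OF i] show False by simp
  qed
  then have "Re (qform n rho v) > 0" using pd unfolding pd_mat_def by blast
  then show ?thesis using q by simp
qed

theorem mainTheorem5:
  fixes n :: nat and \<rho> A :: "complex mat"
  assumes "density_mat n \<rho>"
    and "hermitian_mat n A"
  shows "(\<forall>f \<in> F_op_r. I_f f n \<rho> A \<le> I_SLD n \<rho> A \<and>
                         I_SLD n \<rho> A \<le> 1 / (2 * f_zero f) * I_f f n \<rho> A)
         \<and> I_WY n \<rho> A \<le> I_SLD n \<rho> A \<and> I_SLD n \<rho> A \<le> 2 * I_WY n \<rho> A"
proof -
  have pd: "pd_mat n \<rho>" using assms(1) unfolding density_mat_def by simp
  then have h: "hermitian_mat n \<rho>" unfolding pd_mat_def by simp
  from hermitian_spectral[OF h] obtain U0 lam0 where "spectral_decomp n \<rho> U0 lam0" by blast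
  then have ex: "\<exists>p. spectral_decomp n \<rho> (fst p) (snd p)" by (intro exI[of _ "(U0, lam0)"]) simp
  define U where "U = fst (eig_decomp n \<rho>)"
  define lam where "lam = snd (eig_decomp n \<rho>)"
  have sd: "spectral_decomp n \<rho> U lam"
    unfolding U_def lam_def eig_decomp_def by (rule someI_ex[OF ex])
  have eig: "eig_decomp n \<rho> = (U, lam)" unfolding U_def lam_def by simp
  have uU: "unitary_mat n U" and rho: "\<rho> = U * mat_diag n (\<lambda>i. complex_of_real (lam i)) * adj U"
    using sd unfolding spectral_decomp_def by auto
  have lp: "\<And>i. i < n \<Longrightarrow> lam i > 0" using lam_pos_of_pd[OF pd sd] .
  interpret sctx n U lam \<rho> A
    by (unfold_locales) (use uU rho lp assms(2) in auto)
  show ?thesis using ineq_f[OF eig] ineq_wy by blast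
qed

end
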